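(* Let $k\ge2$ and let $G_1$ be a graph on $k$ vertices whose complement is the cycle $C_k$ (for $k=2$, $C_2$ is the complete graph on $2$ vertices). For $d\ge2$ let $H$ be the join of $d$ copies of $G_1$ (on disjoint vertex sets). Then for $i\ge1$, $$\beta_{i,i+1}(H)=\binom{dk}{i+1}\frac{i(dk-i-2)}{dk-1}+d\binom{(d-1)k}{i-k+1},$$ and $\beta_{i,i+2}(H)=d\binom{(d-1)k}{i-k+2}$ if $k\ge4$, while $\beta_{i,i+2}(H)=0$ if $k\in\{2,3\}$.
   Context: The join $G*H$ of graphs with disjoint vertex sets has all edges of $G$, of $H$, and all pairs $\{x,y\}$ with $x\in V(G)$, $y\in V(H)$. For a finite simple graph $G$ on vertex set $V$, $R=\mathbb{K}[x_v:v\in V]$ over a fixed field $\mathbb{K}$, $I(G)=\langle x_ux_v:\{u,v\}\in E(G)\rangle$, and $\beta_{i,d}(G)=\beta_{i,d}(R/I(G))$ is the graded Betti number. Binomial coefficients $\binom{a}{b}$ are $0$ if $b<0$ or $b>a$. *)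

theory Defs
  imports Complex_Main "HOL-Library.Function_Algebras" "HOL-Library.Product_Lexorder"
begin

text \<open>A finite simple graph is given by a finite vertex set V and a symmetric,
irreflexive edge relation E on V. Variables x_v (v in V) of the polynomial ring
R = K[x_v : v in V]; a monomial is encoded by its exponent vector a :: 'v => nat
(supported in V).\<close>

definition in_edge_ideal :: "('v \<Rightarrow> 'v \<Rightarrow> bool) \<Rightarrow> ('v \<Rightarrow> nat) \<Rightarrow> bool" where
  "in_edge_ideal E a \<longleftrightarrow> (\<exists>u v. E u v \<and> 0 < a u \<and> 0 < a v)"

text \<open>Tor_i^R(R/I(G), K) is computed with the Koszul resolution of K = R/(x_v),
i.e. as homology of the Koszul complex K(x; R/I(G)). Its multidegree-a part in
homological degree i has K-basis the elements e_F (x) x^(a - 1_F), with F a subset of V,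
|F| = i, F contained in supp a, and x^(a - 1_F) a standard monomial (not in I(G)).\<close>

definition kbasis :: "'v set \<Rightarrow> ('v \<Rightarrow> 'v \<Rightarrow> bool) \<Rightarrow> ('v \<Rightarrow> nat) \<Rightarrow> nat \<Rightarrow> 'v set set" where
  "kbasis V E a i = {F. F \<subseteq> V \<and> card F = i \<and> (\<forall>v\<in>F. 0 < a v) \<and>
       \<not> in_edge_ideal E (\<lambda>v. a v - (if v \<in> F then 1 else 0))}"

text \<open>Chains: K-linear combinations of the basis elements, as coefficient functions.\<close>
definition kchains :: "'v set \<Rightarrow> ('v \<Rightarrow> 'v \<Rightarrow> bool) \<Rightarrow> ('v \<Rightarrow> nat) \<Rightarrow> nat \<Rightarrow> ('v set \<Rightarrow> 'k::field) set" where
  "kchains V E a i = {c. \<forall>F. F \<notin> kbasis V E a i \<longrightarrow> c F = 0}"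

text \<open>Koszul differential: e_F |-> sum over j in F of (-1)^(#{u in F. u < j}) x_j e_(F - {j}),
with the image read in R/I(G) (the term vanishes if the resulting monomial is in I(G)).\<close>
definition kcoef :: "'v::linorder set \<Rightarrow> 'v set \<Rightarrow> 'k::field" where
  "kcoef F G = (if G \<subseteq> F \<and> card (F - G) = 1
                then (-1) ^ card {u\<in>G. u < the_elem (F - G)} else 0)"

definition kbd :: "'v::linorder set \<Rightarrow> ('v \<Rightarrow> 'v \<Rightarrow> bool) \<Rightarrow> ('v \<Rightarrow> nat) \<Rightarrow> nat
    \<Rightarrow> ('v set \<Rightarrow> 'k::field) \<Rightarrow> ('v set \<Rightarrow> 'k)" where
  "kbd V E a i c = (\<lambda>G. if G \<in> kbasis V E a (i - 1)
       then (\<Sum>F\<in>kbasis V E a i. c F * kcoef F G) else 0)"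

definition kscale :: "'k::field \<Rightarrow> ('b \<Rightarrow> 'k) \<Rightarrow> ('b \<Rightarrow> 'k)" where
  "kscale r c = (\<lambda>x. r * c x)"

definition koszul_hdim :: "'k::field itself \<Rightarrow> 'v::linorder set \<Rightarrow> ('v \<Rightarrow> 'v \<Rightarrow> bool)
    \<Rightarrow> ('v \<Rightarrow> nat) \<Rightarrow> nat \<Rightarrow> nat" where
  "koszul_hdim K V E a i =
     vector_space.dim (kscale :: 'k \<Rightarrow> _)
        {c \<in> kchains V E a i. i = 0 \<or> kbd V E a i c = (\<lambda>_. 0)}
   - vector_space.dim (kscale :: 'k \<Rightarrow> _) (kbd V E a (i + 1) ` kchains V E a (i + 1))"

definition betti :: "'k::field itself \<Rightarrow> 'v::linorder set \<Rightarrow> ('v \<Rightarrow> 'v \<Rightarrow> bool)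
    \<Rightarrow> nat \<Rightarrow> nat \<Rightarrow> nat" where
  "betti K V E i j =
     (\<Sum>a\<in>{a. (\<forall>v. v \<notin> V \<longrightarrow> a v = 0) \<and> sum a V = j}. koszul_hdim K V E a i)"

definition cycle_adj :: "nat \<Rightarrow> nat \<Rightarrow> nat \<Rightarrow> bool" where
  "cycle_adj k a b \<longleftrightarrow> a < k \<and> b < k \<and> a \<noteq> b \<and> (b = (a + 1) mod k \<or> a = (b + 1) mod k)"

definition cocycle_edge :: "nat \<Rightarrow> nat \<Rightarrow> nat \<Rightarrow> bool" where
  "cocycle_edge k a b \<longleftrightarrow> a < k \<and> b < k \<and> a \<noteq> b \<and> \<not> cycle_adj k a b"

definition join_copies_V :: "nat \<Rightarrow> 'a set \<Rightarrow> (nat \<times> 'a) set" where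
  "join_copies_V d V1 = {..<d} \<times> V1"

definition join_copies_E :: "nat \<Rightarrow> 'a set \<Rightarrow> ('a \<Rightarrow> 'a \<Rightarrow> bool) \<Rightarrow> (nat \<times> 'a) \<Rightarrow> (nat \<times> 'a) \<Rightarrow> bool" where
  "join_copies_E d V1 E1 x y \<longleftrightarrow>
     x \<in> join_copies_V d V1 \<and> y \<in> join_copies_V d V1 \<and>
     (fst x \<noteq> fst y \<or> (fst x = fst y \<and> E1 (snd x) (snd y)))"

end

theory Submission
  imports Defs
begin

lemma vs_kscale: "vector_space (kscale :: 'k::field \<Rightarrow> ('b \<Rightarrow> 'k) \<Rightarrow> ('b \<Rightarrow> 'k))"
  by unfold_locales (auto simp: kscale_def fun_eq_iff algebra_simps)

global_interpretation kv: vector_space "kscale :: 'k::field \<Rightarrow> ('b \<Rightarrow> 'k) \<Rightarrow> ('b \<Rightarrow> 'k)"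
  by (rule vs_kscale)

lemma sum_fun_apply: "(sum f A) x = sum (\<lambda>a. f a x) A"
  by (induction A rule: infinite_finite_induct) auto

lemma kscale_apply[simp]: "kscale r c x = r * c x"
  by (simp add: kscale_def)

definition Lsp :: "'b set \<Rightarrow> ('b \<Rightarrow> 'k::field) set" where
  "Lsp X = {c. \<forall>x. x \<notin> X \<longrightarrow> c x = 0}"

definition dlt :: "'b \<Rightarrow> 'b \<Rightarrow> 'k::field" where
  "dlt x = (\<lambda>y. if y = x then 1 else 0)"

lemma dlt_apply[simp]: "dlt x y = (if y = x then 1 else 0)"
  by (simp add: dlt_def)

lemma inj_dlt: "inj (dlt :: 'b \<Rightarrow> 'b \<Rightarrow> 'k::field)"
  by (auto simp: inj_def fun_eq_iff dest: spec[where x = x for x])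

lemma Lsp_subspace: "kv.subspace (Lsp X :: ('b \<Rightarrow> 'k::field) set)"
  by (auto simp: kv.subspace_def Lsp_def)

lemma Lsp_expand:
  fixes c :: "'b \<Rightarrow> 'k::field"
  assumes "finite X" "c \<in> Lsp X"
  shows "c = (\<Sum>x\<in>X. kscale (c x) (dlt x))"
proof
  fix y
  show "c y = (\<Sum>x\<in>X. kscale (c x) (dlt x)) y"
    using assms by (cases "y \<in> X") (auto simp: sum_fun_apply Lsp_def if_distrib cong: if_cong)
qed

lemma dlt_in_Lsp: "x \<in> X \<Longrightarrow> dlt x \<in> Lsp X"
  by (auto simp: Lsp_def)

lemma span_dlt:
  assumes "finite X"
  shows "kv.span (dlt ` X) = (Lsp X :: ('b \<Rightarrow> 'k::field) set)"
proof
  show "kv.span (dlt ` X) \<subseteq> (Lsp X :: ('b \<Rightarrow> 'k::field) set)"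
    by (rule kv.span_minimal) (auto simp: Lsp_subspace dlt_in_Lsp)
  show "(Lsp X :: ('b \<Rightarrow> 'k::field) set) \<subseteq> kv.span (dlt ` X)"
  proof
    fix c :: "'b \<Rightarrow> 'k" assume c: "c \<in> Lsp X"
    have "(\<Sum>x\<in>X. kscale (c x) (dlt x)) \<in> kv.span (dlt ` X)"
      by (intro kv.span_sum kv.span_scale kv.span_base) auto
    then show "c \<in> kv.span (dlt ` X)" using Lsp_expand[OF assms c] by simp
  qed
qed

lemma indep_dlt:
  assumes "finite X"
  shows "kv.independent (dlt ` X :: ('b \<Rightarrow> 'k::field) set)"
proof (rule kv.independent_if_scalars_zero)
  show "finite (dlt ` X :: ('b \<Rightarrow> 'k::field) set)" using assms by simp
  fix f :: "('b \<Rightarrow> 'k) \<Rightarrow> 'k" and v :: "'b \<Rightarrow> 'k"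
  assume s: "(\<Sum>x\<in>dlt ` X. kscale (f x) x) = 0" and v: "v \<in> dlt ` X"
  then obtain y where y: "y \<in> X" "v = dlt y" by auto
  have "(\<Sum>x\<in>X. kscale (f (dlt x)) (dlt x)) = (\<Sum>x\<in>dlt ` X. kscale (f x) x)"
    by (subst sum.reindex) (auto intro: inj_on_subset[OF inj_dlt])
  then have "(\<Sum>x\<in>X. kscale (f (dlt x)) (dlt x)) y = 0" using s by simp
  then have "(\<Sum>x\<in>X. f (dlt x) * (if y = x then 1 else 0)) = 0"
    by (simp add: sum_fun_apply)
  then show "f v = 0" using y assms by (simp add: if_distrib cong: if_cong)
qed

lemma dim_Lsp:
  assumes "finite X"
  shows "kv.dim (Lsp X :: ('b \<Rightarrow> 'k::field) set) = card X"
proof -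
  have "kv.dim (Lsp X :: ('b \<Rightarrow> 'k::field) set) = card (dlt ` X :: ('b \<Rightarrow> 'k::field) set)"
    using kv.dim_eq_card[OF _ indep_dlt[OF assms]] span_dlt[OF assms]
    by (metis kv.span_eq_iff Lsp_subspace)
  also have "\<dots> = card X" by (rule card_image[OF inj_on_subset[OF inj_dlt]]) auto
  finally show ?thesis .
qed

lemma span_Lsp_subset: "S \<subseteq> Lsp X \<Longrightarrow> kv.span S \<subseteq> Lsp X"
  by (rule kv.span_minimal) (auto simp: Lsp_subspace)

lemma basis_fin:
  fixes S :: "('b \<Rightarrow> 'k::field) set"
  assumes "finite X" "S \<subseteq> Lsp X"
  obtains B where "B \<subseteq> S" "kv.independent B" "S \<subseteq> kv.span B" "card B = kv.dim S" "finite B"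
proof -
  obtain B where B: "B \<subseteq> S" "kv.independent B" "S \<subseteq> kv.span B" "card B = kv.dim S"
    using kv.basis_exists by blast
  have "B \<subseteq> kv.span (dlt ` X)" using B(1) assms span_dlt[OF assms(1)] kv.span_superset by blast
  then have "finite B" using kv.independent_span_bound[OF _ B(2)] assms(1) by blast
  with B that show ?thesis by blast
qed

lemma dim_le_fin:
  fixes S T :: "('b \<Rightarrow> 'k::field) set"
  assumes "finite X" "T \<subseteq> Lsp X" "S \<subseteq> kv.span T"
  shows "kv.dim S \<le> kv.dim T"
proof -
  obtain BT where BT: "BT \<subseteq> T" "kv.independent BT" "T \<subseteq> kv.span BT" "card BT = kv.dim T" "finite BT"
    using basis_fin[OF assms(1,2)] by blast
  have "S \<subseteq> kv.span BT" using assms(3) BT(3) kv.span_mono kv.span_span by (metis subset_trans)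
  then show ?thesis using kv.dim_le_card BT by metis
qed

lemma dim_le_card_fin:
  fixes S :: "('b \<Rightarrow> 'k::field) set"
  assumes "finite X" "S \<subseteq> Lsp X"
  shows "kv.dim S \<le> card X"
  using dim_le_fin[OF assms(1) order_refl, of S] assms dim_Lsp[OF assms(1)] kv.span_superset
  by (metis (no_types, lifting) kv.span_eq_iff Lsp_subspace)

global_interpretation kvp: vector_space_pair "kscale :: 'k::field \<Rightarrow> ('b \<Rightarrow> 'k) \<Rightarrow> ('b \<Rightarrow> 'k)"
   "kscale :: 'k::field \<Rightarrow> ('c \<Rightarrow> 'k) \<Rightarrow> ('c \<Rightarrow> 'k)"
  by unfold_locales

lemma inj_dim:
  fixes f :: "('b \<Rightarrow> 'k::field) \<Rightarrow> ('c \<Rightarrow> 'k)" and S :: "('b \<Rightarrow> 'k) set"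
  assumes lin: "Vector_Spaces.linear kscale kscale f" and X: "finite X" "S \<subseteq> Lsp X"
    and inj: "inj_on f (kv.span S)"
  shows "kv.dim (f ` S) = kv.dim S"
proof -
  obtain B where B: "B \<subseteq> S" "kv.independent B" "S \<subseteq> kv.span B" "card B = kv.dim S" "finite B"
    using basis_fin[OF X] by blast
  have spB: "kv.span S = kv.span B"
    using B kv.span_mono kv.span_span by (metis subset_antisym)
  have "kv.independent (f ` B)"
    using kvp.linear_independent_injective_image[OF lin B(2)] inj spB by simp
  moreover have "kv.span (f ` B) = kv.span (f ` S)"
    using kvp.linear_span_image[OF lin] spB by metis
  ultimately have "kv.dim (f ` S) = card (f ` B)"
    by (metis kv.dim_eq_card)
  also have "\<dots> = card B"
    by (rule card_image, rule inj_on_subset[OF inj]) (use B kv.span_superset in blast)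
  finally show ?thesis using B by simp
qed

lemma rank_nullity:
  fixes f :: "('b \<Rightarrow> 'k::field) \<Rightarrow> ('c \<Rightarrow> 'k)"
  assumes lin: "Vector_Spaces.linear kscale kscale f" and X: "finite X"
  shows "kv.dim {c \<in> Lsp X. f c = 0} + kv.dim (f ` Lsp X) = card X"
proof -
  define K where "K = {c \<in> Lsp X. f c = 0}"
  obtain BK where BK: "BK \<subseteq> K" "kv.independent BK" "K \<subseteq> kv.span BK" "card BK = kv.dim K" "finite BK"
    using basis_fin[OF X, of K] by (auto simp: K_def)
  obtain B where B: "BK \<subseteq> B" "B \<subseteq> Lsp X" "kv.independent B" "Lsp X \<subseteq> kv.span B"
    using kv.maximal_independent_subset_extend[of BK "Lsp X"] BK by (auto simp: K_def)
  have finB: "finite B"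
    using kv.independent_span_bound[OF _ B(3), of "dlt ` X"] B(2) span_dlt[OF X] X by auto
  have cardB: "card B = card X"
    using kv.basis_card_eq_dim[OF B(2,4,3)] dim_Lsp[OF X] by simp
  define C where "C = B - BK"
  have finC: "finite C" using finB by (simp add: C_def)
  have spanB: "kv.span B = Lsp X"
    using B span_Lsp_subset by (metis subset_antisym)
  have injC: "inj_on f (kv.span C)"
  proof (subst kvp.linear_inj_on_iff_eq_0[OF lin], simp, intro ballI impI)
    fix x assume x: "x \<in> kv.span C" "f x = 0"
    have "x \<in> kv.span B" using x(1) kv.span_mono[of C B] by (auto simp: C_def)
    then have "x \<in> K" using x(2) spanB by (auto simp: K_def)
    then have xK: "x \<in> kv.span BK" using BK by blast
    obtain u where u: "x = (\<Sum>v\<in>C. kscale (u v) v)" using x(1) kv.span_finite[OF finC] by auto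
    obtain w where w: "x = (\<Sum>v\<in>BK. kscale (w v) v)" using xK kv.span_finite[OF BK(5)] by auto
    define g where "g v = (if v \<in> C then u v else - w v)" for v
    have Bsplit: "B = C \<union> BK" "C \<inter> BK = {}" using B(1) by (auto simp: C_def)
    have "(\<Sum>v\<in>B. kscale (g v) v) = (\<Sum>v\<in>C. kscale (g v) v) + (\<Sum>v\<in>BK. kscale (g v) v)"
      using Bsplit finC BK(5) by (simp add: sum.union_disjoint)
    also have "(\<Sum>v\<in>C. kscale (g v) v) = x" using u by (simp add: g_def)
    also have "(\<Sum>v\<in>BK. kscale (g v) v) = - x"
    proof -
      have "(\<Sum>v\<in>BK. kscale (g v) v) = (\<Sum>v\<in>BK. - kscale (w v) v)"
        using Bsplit by (intro sum.cong) (auto simp: g_def)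
      also have "\<dots> = - x" using w by (simp add: sum_negf)
      finally show ?thesis .
    qed
    finally have "(\<Sum>v\<in>B. kscale (g v) v) = x + - x" .
    then have "(\<Sum>v\<in>B. kscale (g v) v) = 0" by (simp only: add.right_inverse)
    then have g0: "\<forall>v\<in>B. g v = 0" using B(3) kv.dependent_finite[OF finB] by blast
    show "x = 0" using u g0 by (auto simp: g_def C_def intro!: sum.neutral)
  qed
  have indC: "kv.independent (f ` C)"
    using kvp.linear_independent_injective_image[OF lin _ injC] kv.independent_mono[OF B(3)]
    by (auto simp: C_def)
  have fBK: "f ` BK \<subseteq> {0}" using BK(1) by (auto simp: K_def)
  have "kv.span (f ` Lsp X) = kv.span (f ` C)"
  proof -
    have "kv.span (f ` Lsp X) = f ` kv.span (Lsp X)" by (rule kvp.linear_span_image[OF lin])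
    also have "\<dots> = f ` kv.span B" using spanB by (simp add: kv.span_eq_iff[THEN iffD2, OF Lsp_subspace])
    also have "\<dots> = kv.span (f ` B)" by (rule kvp.linear_span_image[OF lin, symmetric])
    also have "f ` B = f ` C \<union> f ` BK" using B(1) by (auto simp: C_def)
    also have "kv.span (f ` C \<union> f ` BK) = kv.span (f ` C)"
    proof (cases "BK = {}")
      case False
      then have "f ` BK = {0}" using fBK by auto
      then show ?thesis by simp
    qed simp
    finally show ?thesis .
  qed
  then have "kv.dim (f ` Lsp X) = card (f ` C)"
    using kv.dim_eq_card[OF _ indC] by metis
  also have "\<dots> = card C" using injC kv.span_superset by (intro card_image) (blast intro: inj_on_subset)
  finally have dimI: "kv.dim (f ` Lsp X) = card C" .
  have "card B = card BK + card C"
    using B(1) finB by (simp add: C_def card_Diff_subset BK(5) card_mono)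
  then show ?thesis using cardB dimI BK(4) by (simp add: K_def)
qed

lemma kcoef_insert:
  assumes "x \<notin> G"
  shows "kcoef (insert x G) G = (-1) ^ card {u\<in>G. u < x}"
proof -
  have "insert x G - G = {x}" using assms by auto
  then show ?thesis by (simp add: kcoef_def subset_insertI)
qed

lemma kcoef_zero:
  assumes "\<not> (\<exists>x. x \<notin> G \<and> F = insert x G)"
  shows "kcoef F G = 0"
proof (rule ccontr)
  assume "kcoef F G \<noteq> 0"
  then have "G \<subseteq> F" "card (F - G) = 1" by (auto simp: kcoef_def split: if_splits)
  then obtain x where "F - G = {x}" by (auto simp: card_1_singleton_iff)
  then have "x \<notin> G" "F = insert x G" using \<open>G \<subseteq> F\<close> by auto
  with assms show False by blast
qed

lemma kcoef_nz: "kcoef F G \<noteq> 0 \<Longrightarrow> \<exists>x. x \<notin> G \<and> F = insert x G"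
  using kcoef_zero by blast

lemma kcoef_sq:
  assumes "x \<notin> G"
  shows "kcoef (insert x G) G * kcoef (insert x G) G = (1 :: 'k::field)"
  using assms by (simp add: kcoef_insert power_mult_distrib[symmetric])

lemma kcoef_ne0:
  assumes "x \<notin> G"
  shows "kcoef (insert x G) G \<noteq> (0 :: 'k::field)"
  by (metis kcoef_sq[OF assms] mult_zero_left zero_neq_one)

lemma card_less_insert:
  assumes "finite G" "y \<notin> G"
  shows "card {u\<in>insert y G. u < x} = card {u\<in>G. u < x} + (if y < x then 1 else 0)"
proof -
  show ?thesis
  proof (cases "y < x")
    case True
    then have "{u\<in>insert y G. u < x} = insert y {u\<in>G. u < x}" by auto
    then show ?thesis using assms True by simp
  next
    case False
    then have "{u\<in>insert y G. u < x} = {u\<in>G. u < x}" by auto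
    then show ?thesis using False by simp
  qed
qed

lemma kcoef_sign:
  fixes x y :: "'v::linorder"
  assumes "finite G" "x \<noteq> y" "x \<notin> G" "y \<notin> G"
  shows "kcoef (insert x (insert y G)) (insert y G) * kcoef (insert y G) G
       = - (kcoef (insert y (insert x G)) (insert x G) * kcoef (insert x G) G :: 'k::field)"
proof -
  have n1: "x \<notin> insert y G" "y \<notin> insert x G" using assms by auto
  have e1: "kcoef (insert x (insert y G)) (insert y G) = ((-1) ^ (card {u\<in>G. u < x} + (if y < x then 1 else 0)) :: 'k)"
    unfolding kcoef_insert[OF n1(1)] card_less_insert[OF assms(1,4)] by (rule refl)
  have e2: "kcoef (insert y (insert x G)) (insert x G) = ((-1) ^ (card {u\<in>G. u < y} + (if x < y then 1 else 0)) :: 'k)"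
    unfolding kcoef_insert[OF n1(2)] card_less_insert[OF assms(1,3)] by (rule refl)
  show ?thesis
    using assms(2) unfolding e1 e2 kcoef_insert[OF assms(3)] kcoef_insert[OF assms(4)]
    by (cases "x < y") (auto simp: power_add not_less_iff_gr_or_eq)
qed

lemma kchains_Lsp: "kchains V E a i = Lsp (kbasis V E a i)"
  by (simp add: kchains_def Lsp_def)

lemma finite_kbasis: "finite V \<Longrightarrow> finite (kbasis V E a i)"
  by (rule finite_subset[of _ "Pow V"]) (auto simp: kbasis_def)

lemma kbd_linear: "Vector_Spaces.linear kscale kscale (kbd V E a i :: ('v::linorder set \<Rightarrow> 'k::field) \<Rightarrow> _)"
  unfolding Vector_Spaces.linear_iff
  by (auto simp: vs_kscale kbd_def fun_eq_iff distrib_right sum.distrib sum_distrib_left mult.assoc)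

lemma kbd_in_Lsp: "kbd V E a i c \<in> Lsp (kbasis V E a (i - 1))"
  by (simp add: kbd_def Lsp_def)

lemma hdim_eq: "koszul_hdim TYPE('k::field) V E a i =
   kv.dim {c \<in> Lsp (kbasis V E a i). i = 0 \<or> kbd V E a i c = (\<lambda>_. 0 :: 'k)}
   - kv.dim (kbd V E a (i + 1) ` (Lsp (kbasis V E a (i + 1)) :: ('v::linorder set \<Rightarrow> 'k) set))"
  by (simp add: koszul_hdim_def kchains_Lsp)

lemma hdim_eq1: "i \<ge> 1 \<Longrightarrow> koszul_hdim TYPE('k::field) V E a i =
   kv.dim {c \<in> Lsp (kbasis V E a i). kbd V E a i c = (0 :: 'v::linorder set \<Rightarrow> 'k)}
   - kv.dim (kbd V E a (i + 1) ` (Lsp (kbasis V E a (i + 1)) :: ('v::linorder set \<Rightarrow> 'k) set))"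
  by (simp add: hdim_eq zero_fun_def)

definition indep :: "('v \<Rightarrow> 'v \<Rightarrow> bool) \<Rightarrow> 'v set \<Rightarrow> bool" where
  "indep E X \<longleftrightarrow> (\<forall>u\<in>X. \<forall>v\<in>X. \<not> E u v)"

lemma iei: "in_edge_ideal E a \<longleftrightarrow> \<not> indep E {v. 0 < a v}"
  by (auto simp: in_edge_ideal_def indep_def)

definition ind :: "'v set \<Rightarrow> 'v \<Rightarrow> nat" where
  "ind W v = (if v \<in> W then 1 else 0)"

lemma sum_one:
  assumes "finite B" "x \<in> B" "\<And>z. z \<in> B \<Longrightarrow> z \<noteq> x \<Longrightarrow> f z = 0"
  shows "sum f B = f x"
proof -
  have "sum f B = sum f {x}"
    using assms by (intro sum.mono_neutral_right) auto
  then show ?thesis by simp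
qed

lemma sum_two:
  assumes "finite B" "x \<in> B" "y \<in> B" "x \<noteq> y" "\<And>z. z \<in> B \<Longrightarrow> z \<noteq> x \<Longrightarrow> z \<noteq> y \<Longrightarrow> f z = 0"
  shows "sum f B = f x + f y"
proof -
  have "sum f B = sum f {x, y}"
    using assms by (intro sum.mono_neutral_right) auto
  then show ?thesis using assms(4) by simp
qed

lemma kbd_dlt:
  assumes "finite V" "F0 \<in> kbasis V E a n"
  shows "kbd V E a n (dlt F0) G = (if G \<in> kbasis V E a (n - 1) then kcoef F0 G else (0::'k::field))"
proof -
  have "(\<Sum>F\<in>kbasis V E a n. dlt F0 F * kcoef F G) = (dlt F0 F0 * kcoef F0 G :: 'k)"
    by (rule sum_one) (use assms finite_kbasis in auto)
  then show ?thesis by (simp add: kbd_def)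
qed

lemma dim_zero_le: "S \<subseteq> {0} \<Longrightarrow> kv.dim S = 0"
  using kv.dim_le_card[of S "{}"] by auto

lemma sq_kcoef:
  assumes "x \<in> S"
  shows "kcoef S (S - {x}) * kcoef S (S - {x}) = (1::'k::field)"
proof -
  have "x \<notin> S - {x}" "insert x (S - {x}) = S" using assms by auto
  then show ?thesis using kcoef_sq[of x "S - {x}"] by simp
qed

lemma sgnW:
  fixes u w :: "'v::linorder"
  assumes "finite W" "u \<in> W" "w \<in> W" "u \<noteq> w"
  shows "kcoef W (W - {u}) * kcoef (W - {u}) (W - {u, w}) =
         - (kcoef W (W - {w}) * kcoef (W - {w}) (W - {u, w}) :: 'k::field)"
proof -
  define H where "H = W - {u, w}"
  have ins: "insert u (insert w H) = W" "insert w H = W - {u}" "insert u H = W - {w}"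
    "insert w (insert u H) = W" "u \<notin> H" "w \<notin> H" "finite H"
    using assms by (auto simp: H_def)
  show ?thesis using kcoef_sign[OF ins(7) assms(4) ins(5,6), where 'k='k] ins
    by (simp add: H_def)
qed

lemma sq_kcoef2:
  assumes "u \<in> W" "w \<in> W" "u \<noteq> w"
  shows "kcoef (W - {u}) (W - {u, w}) * kcoef (W - {u}) (W - {u, w}) = (1::'k::field)"
proof -
  have "W - {u, w} = (W - {u}) - {w}" "w \<in> W - {u}" using assms by auto
  then show ?thesis using sq_kcoef[of w "W - {u}"] by simp
qed

lemma sum_pair:
  assumes "finite B" "\<And>F. F \<in> B \<Longrightarrow> F \<subseteq> W" "W - {u} \<in> B" "W - {w} \<in> B" "u \<noteq> w" "u \<in> W" "w \<in> W"
  shows "(\<Sum>F\<in>B. c F * kcoef F (W - {u, w})) =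
    c (W - {u}) * kcoef (W - {u}) (W - {u, w}) + c (W - {w}) * kcoef (W - {w}) (W - {u, w})"
proof (rule sum_two[OF assms(1,3,4)])
  show "W - {u} \<noteq> W - {w}" using assms by auto
  fix z assume z: "z \<in> B" "z \<noteq> W - {u}" "z \<noteq> W - {w}"
  show "c z * kcoef z (W - {u, w}) = 0"
  proof (rule ccontr)
    assume "c z * kcoef z (W - {u, w}) \<noteq> 0"
    then obtain x where x: "x \<notin> W - {u, w}" "z = insert x (W - {u, w})" using kcoef_nz by fastforce
    have "z \<subseteq> W" using z(1) assms(2) by auto
    then have "x = u \<or> x = w" using x by auto
    then show False using z x assms by auto
  qed
qed

definition Zs :: "('v \<Rightarrow> 'v \<Rightarrow> bool) \<Rightarrow> 'v set \<Rightarrow> ('v \<Rightarrow> 'k::field) set" where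
  "Zs E W = {g. (\<forall>x. x \<notin> W \<longrightarrow> g x = 0) \<and> (\<forall>u\<in>W. \<forall>w\<in>W. u \<noteq> w \<and> \<not> E u w \<longrightarrow> g u = g w)}"

locale sgraph =
  fixes V :: "'v::linorder set" and E :: "'v \<Rightarrow> 'v \<Rightarrow> bool"
  assumes finV: "finite V"
    and Ein: "E u v \<Longrightarrow> u \<in> V \<and> v \<in> V"
    and Eirr: "\<not> E u u"
    and Esym: "E u v \<Longrightarrow> E v u"
begin

lemma indep_single[simp]: "indep E {t}"
  by (simp add: indep_def Eirr)

lemma lemZ:
  assumes aV: "\<forall>v. v \<notin> V \<longrightarrow> a v = 0" and i1: "1 \<le> i"
    and cW: "card {v. 0 < a v} \<le> i" and t: "2 \<le> a t"
  shows "koszul_hdim TYPE('k::field) V E a i = 0"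
proof -
  define W where "W = {v. 0 < a v}"
  have WV: "W \<subseteq> V" using aV by (auto simp: W_def)
  have finW: "finite W" using finite_subset[OF WV finV] .
  define B where "B = kbasis V E a i"
  have BW: "B \<subseteq> {W}"
  proof
    fix F assume "F \<in> B"
    then have "F \<subseteq> W" "card F = i" by (auto simp: B_def kbasis_def W_def)
    then have "F = W" using card_seteq[OF finW] cW by (simp add: W_def)
    then show "F \<in> {W}" by simp
  qed
  have ker0: "{c \<in> Lsp B. kbd V E a i c = (0 :: 'v set \<Rightarrow> 'k)} \<subseteq> {0}"
  proof
    fix c :: "'v set \<Rightarrow> 'k" assume c: "c \<in> {c \<in> Lsp B. kbd V E a i c = 0}"
    have "c = 0"
    proof
      fix F
      show "c F = 0 F"
      proof (cases "F \<in> B")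
        case False then show ?thesis using c by (auto simp: Lsp_def)
      next
        case True
        then have FW: "F = W" using BW by auto
        have tW: "t \<in> W" using t by (auto simp: W_def)
        define G where "G = W - {t}"
        have cWi: "card W = i" using True FW by (auto simp: B_def kbasis_def)
        have supp: "{v. 0 < a v - (if v \<in> G then 1 else 0)} = {v. 0 < a v - (if v \<in> W then 1 else 0)}"
          using t by (auto simp: G_def)
        have GB: "G \<in> kbasis V E a (i - 1)"
          using True FW WV finW tW cWi supp
          by (auto simp: B_def kbasis_def G_def iei W_def)
        have "kbd V E a i c G = 0" using c by simp
        then have "(\<Sum>F\<in>B. c F * kcoef F G) = 0" using GB by (simp add: kbd_def B_def)
        moreover have "(\<Sum>F\<in>B. c F * kcoef F G) = c W * kcoef W G"
          by (rule sum_one) (use True FW BW finite_kbasis[OF finV] B_def in auto)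
        moreover have "W = insert t G" "t \<notin> G" using tW by (auto simp: G_def)
        ultimately show ?thesis using FW kcoef_ne0[of t G] by (metis mult_eq_0_iff zero_fun_apply)
      qed
    qed
    then show "c \<in> {0}" by simp
  qed
  show ?thesis
    using dim_zero_le[OF ker0] i1 by (simp add: hdim_eq1 B_def)
qed

lemma lemS:
  assumes WV: "W \<subseteq> V" and tW: "t \<in> W" and cW: "card W = i + 1" and i1: "1 \<le> i"
    and a_def: "a = (\<lambda>v. ind W v + (if v = t then 1 else 0))"
  shows "koszul_hdim TYPE('k::field) V E a i = 0"
proof -
  have finW: "finite W" using finite_subset[OF WV finV] .
  have supp: "{v. 0 < a v - (if v \<in> F then 1 else 0)} = (W - F) \<union> {t}" if "F \<subseteq> W" for F
    using that tW by (auto simp: a_def ind_def)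
  have kb: "F \<in> kbasis V E a n \<longleftrightarrow> F \<subseteq> W \<and> card F = n \<and> indep E ((W - F) \<union> {t})" for F n
  proof
    assume F: "F \<in> kbasis V E a n"
    then have "F \<subseteq> W" using tW by (auto simp: kbasis_def a_def ind_def split: if_splits)
    then show "F \<subseteq> W \<and> card F = n \<and> indep E ((W - F) \<union> {t})"
      using F supp[of F] by (auto simp: kbasis_def iei)
  next
    assume F: "F \<subseteq> W \<and> card F = n \<and> indep E ((W - F) \<union> {t})"
    then show "F \<in> kbasis V E a n"
      using supp[of F] WV by (auto simp: kbasis_def iei a_def ind_def)
  qed
  define B where "B = kbasis V E a i"
  have finB: "finite B" using finite_kbasis[OF finV] by (simp add: B_def)
  have WB: "W \<in> kbasis V E a (i + 1)" using kb cW by simp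
  have Wt: "W - {t} \<in> B"
  proof -
    have "(W - (W - {t})) \<union> {t} = {t}" using tW by auto
    then have "indep E ((W - (W - {t})) \<union> {t})" by (simp only: indep_single)
    moreover have "card (W - {t}) = i" using cW tW finW by simp
    ultimately show ?thesis using kb[of "W - {t}" i] by (simp add: B_def)
  qed
  define img where "img = kbd V E a (i + 1) ` (Lsp (kbasis V E a (i + 1)) :: ('v set \<Rightarrow> 'k) set)"
  have kerspan: "{c \<in> Lsp B. kbd V E a i c = (0 :: 'v set \<Rightarrow> 'k)} \<subseteq> kv.span img"
  proof
    fix c :: "'v set \<Rightarrow> 'k" assume c: "c \<in> {c \<in> Lsp B. kbd V E a i c = 0}"
    define lam where "lam = c (W - {t}) * kcoef W (W - {t})"
    have tWt: "t \<notin> W - {t}" "W = insert t (W - {t})" using tW by auto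
    have sqt: "kcoef W (W - {t}) * kcoef W (W - {t}) = (1::'k)"
      using kcoef_sq[OF tWt(1)] tWt(2) by simp
    have eq: "c = kscale lam (kbd V E a (i + 1) (dlt W))"
    proof
      fix G
      have rhs: "kscale lam (kbd V E a (i + 1) (dlt W)) G = lam * (if G \<in> B then kcoef W G else 0)"
        using kbd_dlt[OF finV WB, of G, where 'k='k] by (simp add: B_def)
      show "c G = kscale lam (kbd V E a (i + 1) (dlt W)) G"
      proof (cases "G \<in> B")
        case False then show ?thesis using c rhs by (auto simp: Lsp_def)
      next
        case True
        then have GW: "G \<subseteq> W" "card G = i" using kb by (auto simp: B_def)
        then have "card (W - G) = 1" using cW finW card_Diff_subset[of G W] finite_subset[of G W] by simp
        then obtain w where w: "W - G = {w}" by (auto simp: card_1_singleton_iff)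
        then have Gw: "G = W - {w}" "w \<in> W" using GW by auto
        show ?thesis
        proof (cases "w = t")
          case True
          then have "lam * kcoef W G = c G" using Gw sqt by (simp add: lam_def mult.assoc)
          then show ?thesis unfolding rhs if_P[OF \<open>G \<in> B\<close>] by simp
        next
          case False
          define H where "H = W - {w, t}"
          have HB: "H \<in> kbasis V E a (i - 1)"
          proof -
            have "(W - H) \<union> {t} = (W - G) \<union> {t}" using Gw tW by (auto simp: H_def)
            moreover have "card H = i - 1" using Gw GW tW False finW by (auto simp: H_def)
            ultimately show ?thesis using kb[of H] kb[of G i] \<open>G \<in> B\<close> by (auto simp: H_def B_def)
          qed
          have ins: "insert w H = W - {t}" "insert t H = W - {w}" "insert w (insert t H) = W"
            "w \<notin> H" "t \<notin> H" "insert t (insert w H) = W"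
            using Gw tW False by (auto simp: H_def)
          have finH: "finite H" using finW by (simp add: H_def)
          have "kbd V E a i c H = 0" using c by simp
          then have "(\<Sum>F\<in>B. c F * kcoef F H) = 0" using HB by (simp add: kbd_def B_def)
          moreover have "(\<Sum>F\<in>B. c F * kcoef F H) = c (W - {t}) * kcoef (W - {t}) H + c (W - {w}) * kcoef (W - {w}) H"
          proof (rule sum_two[OF finB Wt])
            show "W - {w} \<in> B" using True Gw by simp
            show "W - {t} \<noteq> W - {w}" using False Gw tW by auto
            fix z assume z: "z \<in> B" "z \<noteq> W - {t}" "z \<noteq> W - {w}"
            show "c z * kcoef z H = 0"
            proof (rule ccontr)
              assume "c z * kcoef z H \<noteq> 0"
              then obtain x where x: "x \<notin> H" "z = insert x H" using kcoef_nz by fastforce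
              have "z \<subseteq> W" using z(1) kb by (auto simp: B_def)
              then have "x = w \<or> x = t" using x by (auto simp: H_def)
              then show False using z x ins by auto
            qed
          qed
          ultimately have keq: "c (W - {t}) * kcoef (W - {t}) H + c (W - {w}) * kcoef (W - {w}) H = 0" by simp
          have sgn: "kcoef W (W - {w}) * kcoef (W - {w}) H = - (kcoef W (W - {t}) * kcoef (W - {t}) H :: 'k)"
            using kcoef_sign[OF finH False ins(4,5)] ins by simp
          have s1: "kcoef (W - {t}) H * kcoef (W - {t}) H = (1::'k)"
            using kcoef_sq[OF ins(4)] ins by simp
          have s2: "kcoef (W - {w}) H * kcoef (W - {w}) H = (1::'k)"
            using kcoef_sq[OF ins(5)] ins by simp
          have "c G = lam * kcoef W G"
          proof -
            let ?ct = "c (W - {t})" and ?cw = "c (W - {w})" and ?a = "kcoef (W - {t}) H"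
              and ?b = "kcoef (W - {w}) H" and ?p = "kcoef W (W - {t})" and ?q = "kcoef W (W - {w}) :: 'k"
            have "?cw = ?cw * (?b * ?b)" using s2 by simp
            also have "\<dots> = - ?ct * ?a * ?b" using keq by (simp add: algebra_simps eq_neg_iff_add_eq_0[symmetric])
            finally have cw: "?cw = - ?ct * ?a * ?b" .
            have "?q = ?q * (?b * ?b)" using s2 by simp
            also have "\<dots> = (?q * ?b) * ?b" by (simp only: mult.assoc)
            also have "\<dots> = - ?p * ?a * ?b" using sgn by simp
            finally have q: "?q = - ?p * ?a * ?b" .
            have "lam * ?q = ?ct * (?p * ?p) * (- ?a * ?b)" using q by (simp add: lam_def algebra_simps)
            also have "\<dots> = ?cw" using sqt cw by simp
            finally show ?thesis using Gw by simp
          qed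
          then show ?thesis unfolding rhs if_P[OF \<open>G \<in> B\<close>] .
        qed
      qed
    qed
    have "dlt W \<in> (Lsp (kbasis V E a (i + 1)) :: ('v set \<Rightarrow> 'k) set)" using WB by (rule dlt_in_Lsp)
    then have "kbd V E a (i + 1) (dlt W) \<in> img" by (simp add: img_def)
    then show "c \<in> kv.span img" using eq by (metis kv.span_base kv.span_scale)
  qed
  have imgL: "img \<subseteq> Lsp B" using kbd_in_Lsp[of V E a "i + 1"] by (auto simp: img_def B_def)
  have "kv.dim {c \<in> Lsp B. kbd V E a i c = (0 :: 'v set \<Rightarrow> 'k)} \<le> kv.dim img"
    by (rule dim_le_fin[OF finB imgL kerspan])
  then show ?thesis using i1 by (simp add: hdim_eq1 B_def img_def)
qed

lemma kbasis_sf: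
  assumes "W \<subseteq> V"
  shows "F \<in> kbasis V E (ind W) n \<longleftrightarrow> F \<subseteq> W \<and> card F = n \<and> indep E (W - F)"
proof -
  have supp: "{v. 0 < ind W v - (if v \<in> F then 1 else 0)} = W - F" if "F \<subseteq> W"
    using that by (auto simp: ind_def)
  show ?thesis
  proof
    assume F: "F \<in> kbasis V E (ind W) n"
    then have FW: "F \<subseteq> W" by (auto simp: kbasis_def ind_def split: if_splits)
    then show "F \<subseteq> W \<and> card F = n \<and> indep E (W - F)"
      using F supp[OF FW] by (auto simp: kbasis_def iei)
  next
    assume F: "F \<subseteq> W \<and> card F = n \<and> indep E (W - F)"
    then show "F \<in> kbasis V E (ind W) n"
      using supp assms by (auto simp: kbasis_def iei ind_def)
  qed
qed

lemma kbasis_top: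
  assumes "W \<subseteq> V" "card W = n + 1"
  shows "kbasis V E (ind W) n = (\<lambda>w. W - {w}) ` W"
proof -
  have finW: "finite W" using finite_subset[OF assms(1) finV] .
  show ?thesis
  proof
    show "kbasis V E (ind W) n \<subseteq> (\<lambda>w. W - {w}) ` W"
    proof
      fix F assume "F \<in> kbasis V E (ind W) n"
      then have F: "F \<subseteq> W" "card F = n" using kbasis_sf[OF assms(1)] by auto
      then have "card (W - F) = 1" using assms finW card_Diff_subset[of F W] finite_subset[of F W] by simp
      then obtain w where w: "W - F = {w}" by (auto simp: card_1_singleton_iff)
      then have "F = W - {w}" "w \<in> W" using F by auto
      then show "F \<in> (\<lambda>w. W - {w}) ` W" by auto
    qed
    show "(\<lambda>w. W - {w}) ` W \<subseteq> kbasis V E (ind W) n"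
    proof
      fix F assume "F \<in> (\<lambda>w. W - {w}) ` W"
      then obtain w where w: "w \<in> W" "F = W - {w}" by auto
      then have "W - F = {w}" by auto
      then show "F \<in> kbasis V E (ind W) n"
        using kbasis_sf[OF assms(1)] w assms finW by auto
    qed
  qed
qed

lemma kbasis_full:
  assumes "W \<subseteq> V" "card W = n"
  shows "kbasis V E (ind W) n = {W}"
proof -
  have finW: "finite W" using finite_subset[OF assms(1) finV] .
  have "indep E {}" by (simp add: indep_def)
  then have "F \<in> kbasis V E (ind W) n \<longleftrightarrow> F = W" for F
    using kbasis_sf[OF assms(1), of F n] assms finW card_subset_eq[OF finW, of F] by auto
  then show ?thesis by auto
qed

lemma Q1ker:
  assumes WV: "W \<subseteq> V" and cW: "card W = n + 1" and n1: "1 \<le> n"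
  shows "kv.dim {c \<in> Lsp (kbasis V E (ind W) n). kbd V E (ind W) n c = (0 :: 'v set \<Rightarrow> 'k::field)}
       = kv.dim (Zs E W :: ('v \<Rightarrow> 'k) set)"
proof -
  have finW: "finite W" using finite_subset[OF WV finV] .
  define B where "B = kbasis V E (ind W) n"
  have B: "B = (\<lambda>w. W - {w}) ` W" using kbasis_top[OF WV cW] by (simp add: B_def)
  have finB: "finite B" using finW B by simp
  have BW: "F \<in> B \<Longrightarrow> F \<subseteq> W" for F using B by auto
  have WuB: "u \<in> W \<Longrightarrow> W - {u} \<in> B" for u using B by auto
  have HB: "W - {u, w} \<in> kbasis V E (ind W) (n - 1)" if "u \<in> W" "w \<in> W" "u \<noteq> w" "\<not> E u w" for u w
  proof -
    have "W - (W - {u, w}) = {u, w}" using that by auto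
    moreover have "indep E {u, w}" using that Eirr Esym by (auto simp: indep_def)
    moreover have "card (W - {u, w}) = n - 1" using that cW finW by (simp add: card_Diff_subset)
    ultimately show ?thesis using kbasis_sf[OF WV] by auto
  qed
  define K where "K = {c \<in> Lsp B. kbd V E (ind W) n c = (0 :: 'v set \<Rightarrow> 'k)}"
  define \<phi> where "\<phi> c = (\<lambda>u. if u \<in> W then c (W - {u}) * kcoef W (W - {u}) else 0)" for c :: "'v set \<Rightarrow> 'k"
  have lin: "Vector_Spaces.linear kscale kscale \<phi>"
    unfolding Vector_Spaces.linear_iff
    by (auto simp: vs_kscale \<phi>_def fun_eq_iff distrib_right mult.assoc)
  have KL: "K \<subseteq> Lsp B" by (auto simp: K_def)
  have injL: "inj_on \<phi> (Lsp B)"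
  proof
    fix c c' :: "'v set \<Rightarrow> 'k" assume c: "c \<in> Lsp B" "c' \<in> Lsp B" "\<phi> c = \<phi> c'"
    show "c = c'"
    proof
      fix F
      show "c F = c' F"
      proof (cases "F \<in> B")
        case False then show ?thesis using c by (auto simp: Lsp_def)
      next
        case True
        then obtain u where u: "u \<in> W" "F = W - {u}" using B by auto
        have "\<phi> c u = \<phi> c' u" using c by simp
        then have "c F * kcoef W F = c' F * kcoef W F" using u by (simp add: \<phi>_def)
        moreover have "kcoef W F \<noteq> (0::'k)" using sq_kcoef[OF u(1), where 'k='k] u by force
        ultimately show ?thesis by simp
      qed
    qed
  qed
  have inj: "inj_on \<phi> (kv.span K)"
    using inj_on_subset[OF injL span_Lsp_subset[OF KL]] .
  have img: "\<phi> ` K = Zs E W"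
  proof
    show "\<phi> ` K \<subseteq> Zs E W"
    proof
      fix g assume "g \<in> \<phi> ` K"
      then obtain c where c: "c \<in> K" "g = \<phi> c" by auto
      have "g u = g w" if uw: "u \<in> W" "w \<in> W" "u \<noteq> w" "\<not> E u w" for u w
      proof -
        have "kbd V E (ind W) n c (W - {u, w}) = 0" using c by (simp add: K_def)
        then have "(\<Sum>F\<in>B. c F * kcoef F (W - {u, w})) = 0"
          using HB[OF uw] by (simp add: kbd_def B_def)
        then have keq: "c (W - {u}) * kcoef (W - {u}) (W - {u, w}) + c (W - {w}) * kcoef (W - {w}) (W - {u, w}) = 0"
          using sum_pair[OF finB BW WuB[OF uw(1)] WuB[OF uw(2)] uw(3,1,2), of c] by simp
        let ?cu = "c (W - {u})" and ?cw = "c (W - {w})" and ?au = "kcoef (W - {u}) (W - {u, w})"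
          and ?aw = "kcoef (W - {w}) (W - {u, w})" and ?pu = "kcoef W (W - {u}) :: 'k" and ?pw = "kcoef W (W - {w}) :: 'k"
        have sg: "?pu * ?au = - (?pw * ?aw)" by (rule sgnW[OF finW uw(1,2,3)])
        have sa: "?au * ?au = (1::'k)" by (rule sq_kcoef2[OF uw(1,2,3)])
        have cu: "?cu = - ?cw * ?aw * ?au"
        proof -
          have "?cu = ?cu * (?au * ?au)" using sa by simp
          also have "\<dots> = (?cu * ?au) * ?au" by (simp only: mult.assoc)
          also have "?cu * ?au = - (?cw * ?aw)" using keq by (simp add: eq_neg_iff_add_eq_0)
          finally show ?thesis by simp
        qed
        have "?cu * ?pu = - ?cw * ?aw * (?pu * ?au)" using cu by (simp add: algebra_simps)
        also have "\<dots> = ?cw * ?pw * (?aw * ?aw)" using sg by (simp add: algebra_simps)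
        also have "?aw * ?aw = 1" using sq_kcoef2[OF uw(2,1) uw(3)[symmetric]] by (simp add: insert_commute)
        finally show ?thesis using c uw by (simp add: \<phi>_def)
      qed
      then show "g \<in> Zs E W" using c by (auto simp: Zs_def \<phi>_def)
    qed
    show "Zs E W \<subseteq> \<phi> ` K"
    proof
      fix g :: "'v \<Rightarrow> 'k" assume g: "g \<in> Zs E W"
      define c where "c F = (if F \<in> B then g (the_elem (W - F)) * kcoef W F else 0)" for F
      have cu: "c (W - {u}) = g u * kcoef W (W - {u})" if "u \<in> W" for u
      proof -
        have "W - (W - {u}) = {u}" using that by auto
        then show ?thesis using WuB[OF that] by (simp add: c_def)
      qed
      have cL: "c \<in> Lsp B" by (simp add: c_def Lsp_def)
      have ck: "kbd V E (ind W) n c = 0"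
      proof
        fix G
        show "kbd V E (ind W) n c G = 0 G"
        proof (cases "G \<in> kbasis V E (ind W) (n - 1)")
          case False then show ?thesis by (simp add: kbd_def)
        next
          case True
          then have G: "G \<subseteq> W" "card G = n - 1" "indep E (W - G)" using kbasis_sf[OF WV] by auto
          then have "card (W - G) = 2" using cW finW n1 card_Diff_subset[of G W] finite_subset[of G W] by simp
          then obtain u w where uw0: "W - G = {u, w}" "u \<noteq> w" by (auto simp: card_2_iff)
          then have uw: "u \<in> W" "w \<in> W" "u \<noteq> w" "G = W - {u, w}" using G by auto
          have nE: "\<not> E u w" using G(3) uw0 by (auto simp: indep_def)
          let ?au = "kcoef (W - {u}) (W - {u, w})"
            and ?aw = "kcoef (W - {w}) (W - {u, w})" and ?pu = "kcoef W (W - {u}) :: 'k" and ?pw = "kcoef W (W - {w}) :: 'k"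
          have sg: "?pu * ?au = - (?pw * ?aw)" by (rule sgnW[OF finW uw(1,2,3)])
          have guw: "g u = g w" using g uw nE by (auto simp: Zs_def)
          have "(\<Sum>F\<in>B. c F * kcoef F G) = c (W - {u}) * ?au + c (W - {w}) * ?aw"
            using sum_pair[OF finB BW WuB[OF uw(1)] WuB[OF uw(2)] uw(3,1,2), of c] uw(4) by simp
          also have "\<dots> = g u * (?pu * ?au + ?pw * ?aw)" using cu uw guw by (simp add: algebra_simps)
          also have "\<dots> = 0" using sg by simp
          finally show ?thesis using True by (simp add: kbd_def B_def)
        qed
      qed
      have "\<phi> c = g"
      proof
        fix u
        show "\<phi> c u = g u"
        proof (cases "u \<in> W")
          case True
          then show ?thesis using cu[OF True] sq_kcoef[OF True, where 'k='k] by (simp add: \<phi>_def mult.assoc)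
        next
          case False
          then show ?thesis using g by (simp add: \<phi>_def Zs_def)
        qed
      qed
      then show "g \<in> \<phi> ` K" using cL ck by (auto simp: K_def)
    qed
  qed
  have "kv.dim (\<phi> ` K) = kv.dim K" by (rule inj_dim[OF lin finB KL inj])
  then show ?thesis using img by (simp add: K_def B_def)
qed

lemma Q1img:
  assumes WV: "W \<subseteq> V" and cW: "card W = n + 1"
  shows "kv.dim (kbd V E (ind W) (n + 1) ` (Lsp (kbasis V E (ind W) (n + 1)) :: ('v set \<Rightarrow> 'k::field) set)) = 1"
proof -
  have finW: "finite W" using finite_subset[OF WV finV] .
  have B1: "kbasis V E (ind W) (n + 1) = {W}" by (rule kbasis_full[OF WV cW])
  have WB: "W \<in> kbasis V E (ind W) (n + 1)" using B1 by simp
  obtain w where w: "w \<in> W" using cW by fastforce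
  have wB: "W - {w} \<in> kbasis V E (ind W) n" using kbasis_top[OF WV cW] w by auto
  let ?v = "kbd V E (ind W) (n + 1) (dlt W) :: 'v set \<Rightarrow> 'k"
  have "?v (W - {w}) = kcoef W (W - {w})" using kbd_dlt[OF finV WB, of "W - {w}", where 'k='k] wB by simp
  then have v0: "?v \<noteq> 0" using sq_kcoef[OF w, where 'k='k] by (metis mult_zero_left zero_fun_apply zero_neq_one)
  have L: "(Lsp {W} :: ('v set \<Rightarrow> 'k) set) = kv.span {dlt W}" using span_dlt[of "{W}", where 'k='k] by simp
  have "kbd V E (ind W) (n + 1) ` (Lsp (kbasis V E (ind W) (n + 1)) :: ('v set \<Rightarrow> 'k) set)
      = kbd V E (ind W) (n + 1) ` kv.span {dlt W}" unfolding B1 L ..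
  also have "\<dots> = kv.span {?v}"
  proof -
    have lin: "Vector_Spaces.linear kscale kscale (kbd V E (ind W) (n + 1) :: ('v set \<Rightarrow> 'k) \<Rightarrow> _)"
      by (rule kbd_linear)
    show ?thesis using kvp.linear_span_image[OF lin, of "{dlt W}"] by simp
  qed
  finally have "kbd V E (ind W) (n + 1) ` (Lsp (kbasis V E (ind W) (n + 1)) :: ('v set \<Rightarrow> 'k) set) = kv.span {?v}" .
  then show ?thesis using v0 by (simp add: kv.dim_span kv.dim_eq_card_independent)
qed

lemma Q1:
  assumes WV: "W \<subseteq> V" and cW: "card W = n + 1" and n1: "1 \<le> n"
  shows "koszul_hdim TYPE('k::field) V E (ind W) n = kv.dim (Zs E W :: ('v \<Rightarrow> 'k) set) - 1"
  using Q1ker[OF assms, where 'k='k] Q1img[OF WV cW, where 'k='k] n1 by (simp add: hdim_eq1)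

lemma card_kbasis_sf:
  assumes WV: "W \<subseteq> V" and n: "n \<le> card W"
  shows "card (kbasis V E (ind W) n) = card {S. S \<subseteq> W \<and> card S = card W - n \<and> indep E S}"
proof -
  have finW: "finite W" using finite_subset[OF WV finV] .
  have "bij_betw (\<lambda>F. W - F) (kbasis V E (ind W) n) {S. S \<subseteq> W \<and> card S = card W - n \<and> indep E S}"
  proof (rule bij_betw_byWitness[where f' = "\<lambda>S. W - S"])
    show "\<forall>F\<in>kbasis V E (ind W) n. W - (W - F) = F" using kbasis_sf[OF WV] by auto
    show "\<forall>S\<in>{S. S \<subseteq> W \<and> card S = card W - n \<and> indep E S}. W - (W - S) = S" by auto
    show "(\<lambda>F. W - F) ` kbasis V E (ind W) n \<subseteq> {S. S \<subseteq> W \<and> card S = card W - n \<and> indep E S}"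
      using kbasis_sf[OF WV] finW by (auto simp: card_Diff_subset finite_subset)
    show "(\<lambda>S. W - S) ` {S. S \<subseteq> W \<and> card S = card W - n \<and> indep E S} \<subseteq> kbasis V E (ind W) n"
    proof
      fix F assume "F \<in> (\<lambda>S. W - S) ` {S. S \<subseteq> W \<and> card S = card W - n \<and> indep E S}"
      then obtain S where S: "S \<subseteq> W" "card S = card W - n" "indep E S" "F = W - S" by auto
      then have "card F = n" using finW n by (simp add: card_Diff_subset finite_subset)
      moreover have "W - F = S" using S by auto
      ultimately show "F \<in> kbasis V E (ind W) n" using kbasis_sf[OF WV] S by auto
    qed
  qed
  then show ?thesis by (rule bij_betw_same_card)
qed

lemma Q2img:
  assumes WV: "W \<subseteq> V" and cW: "card W = i + 2"
  shows "kv.dim (kbd V E (ind W) (i + 1) ` (Lsp (kbasis V E (ind W) (i + 1)) :: ('v set \<Rightarrow> 'k::field) set))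
     = card W - kv.dim (Zs E W :: ('v \<Rightarrow> 'k) set)"
proof -
  have finW: "finite W" using finite_subset[OF WV finV] .
  have cW': "card W = (i + 1) + 1" using cW by simp
  have B: "kbasis V E (ind W) (i + 1) = (\<lambda>w. W - {w}) ` W" by (rule kbasis_top[OF WV cW'])
  have "inj_on (\<lambda>w. W - {w}) W" by (auto simp: inj_on_def)
  then have cB: "card (kbasis V E (ind W) (i + 1)) = card W" using B card_image by metis
  have rn: "kv.dim {c \<in> Lsp (kbasis V E (ind W) (i + 1)). kbd V E (ind W) (i + 1) c = (0 :: 'v set \<Rightarrow> 'k)}
     + kv.dim (kbd V E (ind W) (i + 1) ` (Lsp (kbasis V E (ind W) (i + 1)) :: ('v set \<Rightarrow> 'k::field) set))
     = card (kbasis V E (ind W) (i + 1))"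
    by (rule rank_nullity[OF kbd_linear finite_kbasis[OF finV]])
  have "kv.dim {c \<in> Lsp (kbasis V E (ind W) (i + 1)). kbd V E (ind W) (i + 1) c = (0 :: 'v set \<Rightarrow> 'k)}
     = kv.dim (Zs E W :: ('v \<Rightarrow> 'k) set)" by (rule Q1ker[OF WV cW']) simp
  then show ?thesis using rn cB by simp
qed

lemma Q2ker_a:
  assumes WV: "W \<subseteq> V" and cW: "card W = i + 2" and i1: "1 \<le> i"
    and no3: "\<And>S. S \<subseteq> W \<Longrightarrow> card S = 3 \<Longrightarrow> \<not> indep E S"
  shows "kv.dim {c \<in> Lsp (kbasis V E (ind W) i). kbd V E (ind W) i c = (0 :: 'v set \<Rightarrow> 'k::field)}
     = card {S. S \<subseteq> W \<and> card S = 2 \<and> indep E S}"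
proof -
  have finW: "finite W" using finite_subset[OF WV finV] .
  have "card (kbasis V E (ind W) (i - 1)) = card {S. S \<subseteq> W \<and> card S = card W - (i - 1) \<and> indep E S}"
    by (rule card_kbasis_sf[OF WV]) (use cW in simp)
  also have "{S. S \<subseteq> W \<and> card S = card W - (i - 1) \<and> indep E S} = {}" using no3 cW i1 by auto
  finally have e: "kbasis V E (ind W) (i - 1) = {}" using finite_kbasis[OF finV] by simp
  then have "{c \<in> Lsp (kbasis V E (ind W) i). kbd V E (ind W) i c = (0 :: 'v set \<Rightarrow> 'k::field)}
      = Lsp (kbasis V E (ind W) i)" by (auto simp: kbd_def fun_eq_iff)
  then have "kv.dim {c \<in> Lsp (kbasis V E (ind W) i). kbd V E (ind W) i c = (0 :: 'v set \<Rightarrow> 'k::field)}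
      = card (kbasis V E (ind W) i)" using dim_Lsp[OF finite_kbasis[OF finV]] by simp
  also have "\<dots> = card {S. S \<subseteq> W \<and> card S = card W - i \<and> indep E S}"
    by (rule card_kbasis_sf[OF WV]) (use cW in simp)
  finally show ?thesis using cW by simp
qed

lemma Q2ker_b:
  assumes WV: "W \<subseteq> V" and cW: "card W = i + 2" and i1: "1 \<le> i"
    and uniq: "\<And>S x y v. S \<subseteq> W \<Longrightarrow> card S = 3 \<Longrightarrow> indep E S \<Longrightarrow> x \<in> S \<Longrightarrow> y \<in> S \<Longrightarrow> x \<noteq> y
        \<Longrightarrow> v \<in> W \<Longrightarrow> v \<notin> {x, y} \<Longrightarrow> indep E {x, y, v} \<Longrightarrow> v \<in> S"
  shows "kv.dim {c \<in> Lsp (kbasis V E (ind W) i). kbd V E (ind W) i c = (0 :: 'v set \<Rightarrow> 'k::field)}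
     = card {S. S \<subseteq> W \<and> card S = 2 \<and> indep E S} - card {S. S \<subseteq> W \<and> card S = 3 \<and> indep E S}"
proof -
  have finW: "finite W" using finite_subset[OF WV finV] .
  define B where "B = kbasis V E (ind W) i"
  define B' where "B' = kbasis V E (ind W) (i - 1)"
  have finB: "finite B" "finite B'" using finite_kbasis[OF finV] by (auto simp: B_def B'_def)
  define img where "img = kbd V E (ind W) i ` (Lsp B :: ('v set \<Rightarrow> 'k) set)"
  have rn: "kv.dim {c \<in> Lsp B. kbd V E (ind W) i c = (0 :: 'v set \<Rightarrow> 'k)} + kv.dim img = card B"
    unfolding img_def by (rule rank_nullity[OF kbd_linear finB(1)])
  have imgL: "img \<subseteq> Lsp B'" using kbd_in_Lsp[of V E "ind W" i] by (auto simp: img_def B'_def)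
  have lin: "Vector_Spaces.linear kscale kscale (kbd V E (ind W) i :: ('v set \<Rightarrow> 'k) \<Rightarrow> _)"
    by (rule kbd_linear)
  have subimg: "kv.subspace img" unfolding img_def
    by (rule kvp.linear_subspace_image[OF lin Lsp_subspace])
  have dltimg: "dlt G \<in> img" if G: "G \<in> B'" for G
  proof -
    have G1: "G \<subseteq> W" "card G = i - 1" "indep E (W - G)" using G kbasis_sf[OF WV] by (auto simp: B'_def)
    have "card (W - G) = 3" using G1 cW i1 finW by (simp add: card_Diff_subset finite_subset)
    then obtain x y z where xyz: "W - G = {x, y, z}" "x \<noteq> y" "x \<noteq> z" "y \<noteq> z"
      by (auto simp: card_3_iff)
    define F where "F = insert z G"
    have zG: "z \<notin> G" using xyz by auto
    have FB: "F \<in> B"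
    proof -
      have "W - F = {x, y}" using xyz by (auto simp: F_def)
      moreover have "indep E {x, y}" using G1(3) xyz by (auto simp: indep_def)
      moreover have "F \<subseteq> W" using G1 xyz by (auto simp: F_def)
      moreover have "card F = i" using G1 zG i1 finW by (simp add: F_def finite_subset)
      ultimately show ?thesis using kbasis_sf[OF WV] by (auto simp: B_def)
    qed
    have eq: "kbd V E (ind W) i (dlt F) = kscale (kcoef F G) (dlt G :: 'v set \<Rightarrow> 'k)"
    proof
      fix G'
      have lhs: "kbd V E (ind W) i (dlt F) G' = (if G' \<in> B' then kcoef F G' else (0::'k))"
        using kbd_dlt[OF finV FB[unfolded B_def], of G', where 'k='k] by (simp add: B'_def)
      show "kbd V E (ind W) i (dlt F) G' = kscale (kcoef F G) (dlt G :: 'v set \<Rightarrow> 'k) G'"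
      proof (cases "G' = G")
        case True
        have "kbd V E (ind W) i (dlt F) G' = (kcoef F G' :: 'k)" using lhs G True by simp
        then show ?thesis using True by simp
      next
        case False
        have "kcoef F G' = (0::'k)" if G'B: "G' \<in> B'"
        proof (rule ccontr)
          assume "kcoef F G' \<noteq> (0::'k)"
          then obtain v where v: "v \<notin> G'" "F = insert v G'" using kcoef_nz by metis
          have G'1: "G' \<subseteq> W" "indep E (W - G')" using G'B kbasis_sf[OF WV] by (auto simp: B'_def)
          have vW: "v \<in> W" "v \<notin> {x, y}" using v G1 xyz by (auto simp: F_def)
          have "W - G' = {x, y, v}"
          proof -
            have "W - F = {x, y}" using xyz by (auto simp: F_def)
            then show ?thesis using v vW G'1 by auto
          qed
          then have "indep E {x, y, v}" using G'1 by simp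
          then have "v \<in> W - G" using uniq[of "W - G" x y v] xyz G1 vW by auto
          then have "v = z" using vW xyz by auto
          then have "G' = G" using v zG by (auto simp: F_def)
          then show False using False by simp
        qed
        then show ?thesis using lhs False by auto
      qed
    qed
    have sq: "kcoef F G * kcoef F G = (1::'k)" using kcoef_sq[OF zG] by (simp add: F_def)
    have "(dlt F :: 'v set \<Rightarrow> 'k) \<in> Lsp B" by (rule dlt_in_Lsp[OF FB])
    then have "kbd V E (ind W) i (dlt F) \<in> img" by (simp add: img_def)
    then have "kscale (kcoef F G) (kbd V E (ind W) i (dlt F)) \<in> img"
      by (rule kv.subspace_scale[OF subimg])
    also have "kscale (kcoef F G) (kbd V E (ind W) i (dlt F)) = (dlt G :: 'v set \<Rightarrow> 'k)"
      unfolding eq using sq by (simp add: fun_eq_iff mult.assoc[symmetric])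
    finally show ?thesis .
  qed
  have "Lsp B' \<subseteq> kv.span img"
  proof -
    have "dlt ` B' \<subseteq> kv.span img" using dltimg kv.span_base by blast
    then have "kv.span (dlt ` B') \<subseteq> kv.span img" using kv.span_mono kv.span_span by metis
    then show ?thesis using span_dlt[OF finB(2), where 'k='k] by simp
  qed
  then have "kv.dim (Lsp B' :: ('v set \<Rightarrow> 'k) set) \<le> kv.dim img" by (rule dim_le_fin[OF finB(2) imgL])
  moreover have "kv.dim img \<le> card B'" by (rule dim_le_card_fin[OF finB(2) imgL])
  ultimately have di: "kv.dim img = card B'" using dim_Lsp[OF finB(2), where 'k='k] by simp
  have "card B = card {S. S \<subseteq> W \<and> card S = 2 \<and> indep E S}"
    unfolding B_def by (subst card_kbasis_sf[OF WV]) (use cW in simp_all)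
  moreover have "card B' = card {S. S \<subseteq> W \<and> card S = 3 \<and> indep E S}"
    unfolding B'_def by (subst card_kbasis_sf[OF WV]) (use cW i1 in auto)
  ultimately show ?thesis using rn di by (simp add: B_def)
qed

end

definition sc :: "nat \<Rightarrow> nat \<Rightarrow> nat" where "sc k u = (u + 1) mod k"
definition pr :: "nat \<Rightarrow> nat \<Rightarrow> nat" where "pr k u = (u + k - 1) mod k"
definition pm :: "nat \<Rightarrow> nat \<Rightarrow> nat \<Rightarrow> nat" where "pm k u s = (u + (k - 1) * s) mod k"

lemma sc_lt: "0 < k \<Longrightarrow> sc k u < k" by (simp add: sc_def)
lemma pr_lt: "0 < k \<Longrightarrow> pr k u < k" by (simp add: pr_def)
lemma pm_lt: "0 < k \<Longrightarrow> pm k u s < k" by (simp add: pm_def)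

lemma sc_pr: "u < k \<Longrightarrow> sc k (pr k u) = u"
proof -
  assume u: "u < k"
  then have k: "1 \<le> k" by simp
  have "sc k (pr k u) = ((u + k - 1) mod k + 1) mod k" by (simp add: sc_def pr_def)
  also have "\<dots> = (u + k - 1 + 1) mod k" by (rule mod_add_left_eq)
  also have "u + k - 1 + 1 = u + k" using k by simp
  finally show ?thesis using u by simp
qed

lemma pr_sc: "u < k \<Longrightarrow> pr k (sc k u) = u"
proof -
  assume u: "u < k"
  then have k: "1 \<le> k" by simp
  have "pr k (sc k u) = ((u + 1) mod k + k - 1) mod k" by (simp add: sc_def pr_def)
  also have "\<dots> = ((u + 1) mod k + (k - 1)) mod k" using k by simp
  also have "\<dots> = (u + 1 + (k - 1)) mod k" by (simp add: mod_add_left_eq)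
  also have "u + 1 + (k - 1) = u + k" using k by simp
  finally show ?thesis using u by simp
qed

lemma sc_neq: "2 \<le> k \<Longrightarrow> u < k \<Longrightarrow> sc k u \<noteq> u"
  by (cases "u + 1 = k") (auto simp: sc_def)

lemma sc_alt: "u < k \<Longrightarrow> sc k u = (if u + 1 = k then 0 else u + 1)"
  by (auto simp: sc_def)

lemma pm_0: "u < k \<Longrightarrow> pm k u 0 = u" by (simp add: pm_def)

lemma pm_Suc: "0 < k \<Longrightarrow> pm k u (Suc s) = pr k (pm k u s)"
proof -
  assume k: "0 < k"
  have "pr k (pm k u s) = ((u + (k - 1) * s) mod k + (k - 1)) mod k"
    using k by (simp add: pr_def pm_def)
  also have "\<dots> = (u + (k - 1) * s + (k - 1)) mod k" by (simp add: mod_add_left_eq)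
  also have "u + (k - 1) * s + (k - 1) = u + (k - 1) * Suc s" by simp
  finally show ?thesis by (simp add: pm_def)
qed

lemma pm_sc: "0 < k \<Longrightarrow> pm k (sc k u) (Suc s) = pm k u s"
proof -
  assume k: "0 < k"
  have "pm k (sc k u) (Suc s) = ((u + 1) mod k + (k - 1) * Suc s) mod k" by (simp add: pm_def sc_def)
  also have "\<dots> = (u + 1 + (k - 1) * Suc s) mod k" by (simp add: mod_add_left_eq)
  also have "u + 1 + (k - 1) * Suc s = (u + (k - 1) * s) + k" using k by simp
  finally show ?thesis by (simp add: pm_def)
qed

lemma pm_ex:
  assumes u: "u < k" and v: "v < k"
  shows "\<exists>m. pm k u m = v"
proof -
  define m where "m = (u + k - v) mod k"
  have vm: "(v + m) mod k = u"
  proof (cases "v \<le> u")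
    case True
    have e: "u + k - v = (u - v) + k" using True by simp
    have "u - v < k" using u by simp
    then have "m = u - v" unfolding m_def e by simp
    then have "v + m = u" using True by simp
    then show ?thesis using u by simp
  next
    case False
    have "u + k - v < k" using False v by linarith
    then have "m = u + k - v" unfolding m_def by simp
    then have "v + m = u + k" using False v by simp
    then show ?thesis using u by simp
  qed
  have "pm k u m = (u + (k - 1) * m) mod k" by (simp add: pm_def)
  also have "\<dots> = ((v + m) mod k + (k - 1) * m) mod k" using vm by simp
  also have "\<dots> = (v + m + (k - 1) * m) mod k" by (rule mod_add_left_eq)
  also have "v + m + (k - 1) * m = v + k * m"
  proof -
    have "(k - 1) * m + m = k * m" using u by (cases k) simp_all
    then show ?thesis by simp
  qed
  also have "(v + k * m) mod k = v" using v by simp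
  finally show ?thesis by blast
qed


lemma Zs_subspace: "kv.subspace (Zs E W :: ('v \<Rightarrow> 'k::field) set)"
  unfolding kv.subspace_def Zs_def by (auto simp: zero_fun_def)

lemma Zs_out: "g \<in> Zs E W \<Longrightarrow> x \<notin> W \<Longrightarrow> g x = 0"
  by (simp add: Zs_def)

lemma Lsp_out: "c \<in> Lsp X \<Longrightarrow> x \<notin> X \<Longrightarrow> c x = 0"
  by (simp add: Lsp_def)

lemma Zs_Lsp: "Zs E W \<subseteq> Lsp W"
  by (auto simp: Zs_def Lsp_def)

lemma V_eq: "join_copies_V d {..<k} = {..<d} \<times> {..<k}"
  by (simp add: join_copies_V_def)

lemma cyc_adj_sc: "a < k \<Longrightarrow> b < k \<Longrightarrow> cycle_adj k a b \<longleftrightarrow> a \<noteq> b \<and> (b = sc k a \<or> a = sc k b)"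
  by (auto simp: cycle_adj_def sc_def)

lemma sgraph_H:
  assumes "2 \<le> k"
  shows "sgraph (join_copies_V d {..<k}) (join_copies_E d {..<k} (cocycle_edge k))"
  by unfold_locales
    (auto simp: join_copies_V_def join_copies_E_def cocycle_edge_def cycle_adj_def)

lemma nonedge:
  assumes "2 \<le> k" "x \<in> join_copies_V d {..<k}" "y \<in> join_copies_V d {..<k}" "x \<noteq> y"
  shows "\<not> join_copies_E d {..<k} (cocycle_edge k) x y \<longleftrightarrow>
     fst x = fst y \<and> (snd y = sc k (snd x) \<or> snd x = sc k (snd y))"
proof -
  have "fst x = fst y \<Longrightarrow> snd x \<noteq> snd y" using assms(4) by (cases x, cases y) auto
  then show ?thesis using assms cyc_adj_sc[of "snd x" k "snd y"]
    by (auto simp: join_copies_E_def join_copies_V_def cocycle_edge_def)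
qed

definition full :: "nat \<Rightarrow> (nat \<times> nat) set \<Rightarrow> nat \<Rightarrow> bool" where
  "full k W j \<longleftrightarrow> (\<forall>u<k. (j, u) \<in> W)"
definition Pw :: "nat \<Rightarrow> (nat \<times> nat) set \<Rightarrow> (nat \<times> nat) set" where
  "Pw k W = {x\<in>W. (fst x, pr k (snd x)) \<in> W}"
definition Fl :: "nat \<Rightarrow> nat \<Rightarrow> (nat \<times> nat) set \<Rightarrow> nat set" where
  "Fl k d W = {j. j < d \<and> full k W j}"
definition RR :: "nat \<Rightarrow> nat \<Rightarrow> (nat \<times> nat) set \<Rightarrow> (nat \<times> nat) set" where
  "RR k d W = (W - Pw k W) \<union> (\<lambda>j. (j, 0)) ` Fl k d W"
definition rep :: "nat \<Rightarrow> (nat \<times> nat) set \<Rightarrow> nat \<times> nat \<Rightarrow> nat \<times> nat" where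
  "rep k W x = (if full k W (fst x) then (fst x, 0)
      else (fst x, pm k (snd x) (LEAST s. (fst x, pm k (snd x) (Suc s)) \<notin> W)))"

context
  fixes k d :: nat and W :: "(nat \<times> nat) set"
  assumes k2: "2 \<le> k" and WV: "W \<subseteq> {..<d} \<times> {..<k}"
begin

lemma Zs_iff:
  "g \<in> Zs (join_copies_E d {..<k} (cocycle_edge k)) W \<longleftrightarrow>
   (\<forall>x. x \<notin> W \<longrightarrow> g x = 0) \<and> (\<forall>j u. (j, u) \<in> W \<longrightarrow> (j, sc k u) \<in> W \<longrightarrow> g (j, u) = g (j, sc k u))"
proof -
  have WV': "W \<subseteq> join_copies_V d {..<k}" using WV by (simp add: V_eq)
  show ?thesis
  proof
    assume g: "g \<in> Zs (join_copies_E d {..<k} (cocycle_edge k)) W"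
    show "(\<forall>x. x \<notin> W \<longrightarrow> g x = 0) \<and> (\<forall>j u. (j, u) \<in> W \<longrightarrow> (j, sc k u) \<in> W \<longrightarrow> g (j, u) = g (j, sc k u))"
    proof (intro conjI allI impI)
      fix x assume "x \<notin> W" then show "g x = 0" using g unfolding Zs_def by blast
    next
      fix j u assume ju: "(j, u) \<in> W" "(j, sc k u) \<in> W"
      have uk: "u < k" using ju WV by auto
      have ne: "(j, u) \<noteq> (j, sc k u)" using sc_neq[OF k2 uk] by simp
      have "\<not> join_copies_E d {..<k} (cocycle_edge k) (j, u) (j, sc k u)"
        using nonedge[OF k2, of "(j, u)" d "(j, sc k u)"] ju WV' ne by auto
      then show "g (j, u) = g (j, sc k u)" using g ju ne by (auto simp: Zs_def)
    qed
  next
    assume g: "(\<forall>x. x \<notin> W \<longrightarrow> g x = 0) \<and> (\<forall>j u. (j, u) \<in> W \<longrightarrow> (j, sc k u) \<in> W \<longrightarrow> g (j, u) = g (j, sc k u))"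
    show "g \<in> Zs (join_copies_E d {..<k} (cocycle_edge k)) W"
      unfolding Zs_def
    proof (intro CollectI conjI ballI allI impI)
      fix x assume "x \<notin> W" then show "g x = 0" using g by blast
    next
      fix x y assume xy: "x \<in> W" "y \<in> W" "x \<noteq> y \<and> \<not> join_copies_E d {..<k} (cocycle_edge k) x y"
      then have "fst x = fst y \<and> (snd y = sc k (snd x) \<or> snd x = sc k (snd y))"
        using nonedge[OF k2, of x d y] WV' by auto
      then show "g x = g y" using g xy by (cases x, cases y) auto
    qed
  qed
qed


lemma finW: "finite W" using finite_subset[OF WV] by blast

lemma ex_out:
  assumes "(j, u) \<in> W" "\<not> full k W j"
  shows "\<exists>s. (j, pm k u (Suc s)) \<notin> W"
proof -
  obtain v where v: "v < k" "(j, v) \<notin> W" using assms(2) by (auto simp: full_def)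
  have u: "u < k" using assms(1) WV by auto
  obtain m where m: "pm k u m = v" using pm_ex[OF u v(1)] by blast
  have "m \<noteq> 0"
  proof
    assume "m = 0"
    then have "v = u" using m pm_0[OF u] by simp
    then show False using assms(1) v(2) by simp
  qed
  then obtain s where "m = Suc s" by (cases m) auto
  then show ?thesis using m v by blast
qed

lemma chain:
  assumes ju: "(j, u) \<in> W" and nf: "\<not> full k W j"
    and t: "t \<le> (LEAST s. (j, pm k u (Suc s)) \<notin> W)"
  shows "(j, pm k u t) \<in> W \<and> (\<forall>g \<in> (Zs (join_copies_E d {..<k} (cocycle_edge k)) W :: ((nat \<times> nat) \<Rightarrow> 'k::field) set). g (j, u) = g (j, pm k u t))"
  using t
proof (induction t)
  case 0
  have "u < k" using ju WV by auto
  then show ?case using ju by (simp add: pm_0)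
next
  case (Suc t)
  then have IH: "(j, pm k u t) \<in> W" "\<forall>g \<in> (Zs (join_copies_E d {..<k} (cocycle_edge k)) W :: ((nat \<times> nat) \<Rightarrow> 'k::field) set). g (j, u) = g (j, pm k u t)"
    by auto
  have "t < (LEAST s. (j, pm k u (Suc s)) \<notin> W)" using Suc.prems by simp
  then have inW: "(j, pm k u (Suc t)) \<in> W" using not_less_Least by blast
  have k0: "0 < k" using k2 by simp
  have scp: "sc k (pm k u (Suc t)) = pm k u t"
    using pm_Suc[OF k0] sc_pr[OF pm_lt[OF k0]] by simp
  have "\<forall>g \<in> (Zs (join_copies_E d {..<k} (cocycle_edge k)) W :: ((nat \<times> nat) \<Rightarrow> 'k::field) set). g (j, pm k u (Suc t)) = g (j, pm k u t)"
    using Zs_iff inW IH(1) scp by (metis)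
  then show ?case using IH inW by auto
qed

lemma full_chain:
  assumes f: "full k W j" and g: "g \<in> Zs (join_copies_E d {..<k} (cocycle_edge k)) W" and u: "u < k"
  shows "g (j, u) = g (j, 0)"
  using u
proof (induction u)
  case 0 then show ?case by simp
next
  case (Suc u)
  have "(j, u) \<in> W" "(j, Suc u) \<in> W" using f Suc.prems by (auto simp: full_def)
  moreover have "sc k u = Suc u" using Suc.prems by (simp add: sc_def)
  ultimately have "g (j, u) = g (j, Suc u)" using g Zs_iff by metis
  then show ?case using Suc by simp
qed

lemma rep_nf:
  "\<not> full k W j \<Longrightarrow> rep k W (j, u) = (j, pm k u (LEAST s. (j, pm k u (Suc s)) \<notin> W))"
  by (simp add: rep_def)

lemma rep_in_RR:
  assumes x: "x \<in> W"
  shows "rep k W x \<in> RR k d W"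
proof (cases x)
  case (Pair j u)
  show ?thesis
  proof (cases "full k W j")
    case True
    then have "j \<in> Fl k d W" using x WV Pair by (auto simp: Fl_def)
    then show ?thesis using True Pair by (auto simp: rep_def RR_def)
  next
    case False
    define s0 where "s0 = (LEAST s. (j, pm k u (Suc s)) \<notin> W)"
    have in1: "(j, pm k u s0) \<in> W"
      by (rule conjunct1[OF chain[of j u s0]]) (use x Pair False in \<open>simp_all add: s0_def\<close>)
    have "(j, pm k u (Suc s0)) \<notin> W" unfolding s0_def
      by (rule LeastI_ex, rule ex_out) (use x Pair False in auto)
    then have "(j, pr k (pm k u s0)) \<notin> W" using pm_Suc[of k u s0] k2 by simp
    then have "(j, pm k u s0) \<in> W - Pw k W" using in1 by (simp add: Pw_def)
    then show ?thesis using False Pair by (simp add: rep_def RR_def s0_def)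
  qed
qed

lemma rep_g:
  assumes x: "x \<in> W" and g: "g \<in> Zs (join_copies_E d {..<k} (cocycle_edge k)) W"
  shows "g x = g (rep k W x)"
proof (cases x)
  case (Pair j u)
  have u: "u < k" using x WV Pair by auto
  show ?thesis
  proof (cases "full k W j")
    case True
    have r: "rep k W x = (j, 0)" using True Pair by (simp add: rep_def)
    have "g (j, u) = g (j, 0)" by (rule full_chain[OF True g u])
    then show ?thesis using r Pair by simp
  next
    case False
    have xin: "(j, u) \<in> W" using x Pair by simp
    have r: "rep k W x = (j, pm k u (LEAST s. (j, pm k u (Suc s)) \<notin> W))"
      using False Pair by (simp add: rep_def)
    have "g (j, u) = g (j, pm k u (LEAST s. (j, pm k u (Suc s)) \<notin> W))"
      using conjunct2[OF chain[OF xin False order_refl]] g by blast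
    then show ?thesis using r Pair by simp
  qed
qed

lemma rep_R:
  assumes r: "r \<in> RR k d W"
  shows "rep k W r = r"
proof (cases "r \<in> W - Pw k W")
  case True
  obtain j u where ju: "r = (j, u)" by (cases r)
  have u: "u < k" using True WV ju by auto
  have nf: "\<not> full k W j"
  proof
    assume "full k W j"
    then have "(j, pr k u) \<in> W" using pr_lt[of k u] k2 by (simp add: full_def)
    then show False using True ju by (simp add: Pw_def)
  qed
  have "(j, pm k u (Suc 0)) \<notin> W"
    using True ju pm_Suc[of k u 0] pm_0[OF u] k2 by (simp add: Pw_def)
  then have "(LEAST s. (j, pm k u (Suc s)) \<notin> W) = 0" by (rule Least_eq_0)
  then show ?thesis using nf ju pm_0[OF u] by (simp add: rep_def)
next
  case False
  then obtain j where j: "r = (j, 0)" "j \<in> Fl k d W" using r by (auto simp: RR_def)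
  then show ?thesis by (simp add: rep_def Fl_def)
qed

lemma rep_adj:
  assumes a: "(j, u) \<in> W" "(j, sc k u) \<in> W"
  shows "rep k W (j, sc k u) = rep k W (j, u)"
proof (cases "full k W j")
  case True then show ?thesis by (simp add: rep_def)
next
  case False
  have k0: "0 < k" using k2 by simp
  have u: "u < k" using a WV by auto
  define P where "P s = ((j, pm k u (Suc s)) \<notin> W)" for s
  define P' where "P' s = ((j, pm k (sc k u) (Suc s)) \<notin> W)" for s
  have P'0: "\<not> P' 0" using a pm_sc[OF k0, of u 0] pm_0[OF u] by (simp add: P'_def)
  have P'S: "P' (Suc s) = P s" for s using pm_sc[OF k0, of u "Suc s"] by (simp add: P'_def P_def)
  obtain s1 where s1: "P s1" using ex_out[OF a(1) False] by (auto simp: P_def)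
  have "(LEAST s. P' s) = Suc (LEAST s. P' (Suc s))"
    by (rule Least_Suc[of P' "Suc s1"]) (use s1 P'S P'0 in auto)
  also have "(LEAST s. P' (Suc s)) = (LEAST s. P s)" using P'S by simp
  finally have L: "(LEAST s. P' s) = Suc (LEAST s. P s)" .
  have "rep k W (j, sc k u) = (j, pm k (sc k u) (Suc (LEAST s. P s)))"
    using False L by (simp add: rep_def P'_def)
  also have "\<dots> = (j, pm k u (LEAST s. P s))" using pm_sc[OF k0] by simp
  also have "\<dots> = rep k W (j, u)" using False by (simp add: rep_def P_def)
  finally show ?thesis .
qed

lemma RR_sub: "RR k d W \<subseteq> W"
  using k2 by (auto simp: RR_def Fl_def full_def)

lemma dim_Zs:
  "kv.dim (Zs (join_copies_E d {..<k} (cocycle_edge k)) W :: ((nat \<times> nat) \<Rightarrow> 'k::field) set) = card (RR k d W)"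
proof -
  let ?Z = "Zs (join_copies_E d {..<k} (cocycle_edge k)) W :: ((nat \<times> nat) \<Rightarrow> 'k) set"
  define \<rho> where "\<rho> g = (\<lambda>x. if x \<in> RR k d W then g x else 0)" for g :: "(nat \<times> nat) \<Rightarrow> 'k"
  have lin: "Vector_Spaces.linear kscale kscale \<rho>"
    unfolding Vector_Spaces.linear_iff by (auto simp: vs_kscale \<rho>_def fun_eq_iff)
  have inj: "inj_on \<rho> (kv.span ?Z)"
  proof -
    have "inj_on \<rho> ?Z"
    proof
      fix g g' assume g: "g \<in> ?Z" "g' \<in> ?Z" "\<rho> g = \<rho> g'"
      show "g = g'"
      proof
        fix x
        show "g x = g' x"
        proof (cases "x \<in> W")
          case True
          have R: "rep k W x \<in> RR k d W" by (rule rep_in_RR[OF True])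
          have "g x = g (rep k W x)" by (rule rep_g[OF True g(1)])
          also have "\<dots> = \<rho> g (rep k W x)" using R by (simp add: \<rho>_def)
          also have "\<dots> = \<rho> g' (rep k W x)" using g(3) by simp
          also have "\<dots> = g' (rep k W x)" using R by (simp add: \<rho>_def)
          also have "\<dots> = g' x" by (rule rep_g[OF True g(2), symmetric])
          finally show ?thesis .
        next
          case False then show ?thesis using Zs_out[OF g(1) False] Zs_out[OF g(2) False] by simp
        qed
      qed
    qed
    moreover have "kv.span ?Z = ?Z" by (rule kv.span_eq_iff[THEN iffD2, OF Zs_subspace])
    ultimately show ?thesis by (simp only:)
  qed
  have img: "\<rho> ` ?Z = Lsp (RR k d W)"
  proof
    show "\<rho> ` ?Z \<subseteq> Lsp (RR k d W)" by (auto simp: \<rho>_def Lsp_def)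
    show "Lsp (RR k d W) \<subseteq> \<rho> ` ?Z"
    proof
      fix h :: "(nat \<times> nat) \<Rightarrow> 'k" assume h: "h \<in> Lsp (RR k d W)"
      define g where "g x = (if x \<in> W then h (rep k W x) else 0)" for x
      have gZ: "g \<in> ?Z" unfolding Zs_iff
      proof (intro conjI allI impI)
        fix x :: "nat \<times> nat" assume "x \<notin> W" then show "g x = 0" by (simp add: g_def)
      next
        fix j u assume ju: "(j, u) \<in> W" "(j, sc k u) \<in> W"
        have "rep k W (j, sc k u) = rep k W (j, u)" by (rule rep_adj[OF ju])
        then show "g (j, u) = g (j, sc k u)" using ju by (simp add: g_def)
      qed
      have "\<rho> g = h"
      proof
        fix x show "\<rho> g x = h x"
        proof (cases "x \<in> RR k d W")
          case True
          then have "x \<in> W" using RR_sub by blast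
          then have "g x = h (rep k W x)" by (simp add: g_def)
          also have "rep k W x = x" by (rule rep_R[OF True])
          finally show ?thesis using True by (simp add: \<rho>_def)
        next
          case False
          then show ?thesis using Lsp_out[OF h False] by (simp add: \<rho>_def)
        qed
      qed
      then show "h \<in> \<rho> ` ?Z" using gZ by blast
    qed
  qed
  have "kv.dim (\<rho> ` ?Z) = kv.dim ?Z" by (rule inj_dim[OF lin finW Zs_Lsp inj])
  then show ?thesis using img dim_Lsp[OF finite_subset[OF RR_sub finW], where 'k='k] by simp
qed

lemma card_RR: "card (RR k d W) + card (Pw k W) = card W + card (Fl k d W)"
proof -
  have PW: "Pw k W \<subseteq> W" by (auto simp: Pw_def)
  have finP: "finite (Pw k W)" using finite_subset[OF PW finW] .
  have finF: "finite (Fl k d W)" by (auto simp: Fl_def)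
  have disj: "(W - Pw k W) \<inter> (\<lambda>j. (j, 0)) ` Fl k d W = {}"
  proof -
    have "(j, 0) \<in> Pw k W" if "j \<in> Fl k d W" for j
      using that pr_lt[of k 0] k2 by (auto simp: Fl_def full_def Pw_def)
    then show ?thesis by auto
  qed
  have "card (RR k d W) = card (W - Pw k W) + card ((\<lambda>j. (j, 0::nat)) ` Fl k d W)"
    unfolding RR_def using disj finW finF by (simp add: card_Un_disjoint)
  also have "card ((\<lambda>j. (j, 0::nat)) ` Fl k d W) = card (Fl k d W)"
    by (rule card_image) (auto simp: inj_on_def)
  also have "card (W - Pw k W) = card W - card (Pw k W)" using PW finP by (simp add: card_Diff_subset)
  finally show ?thesis using card_mono[OF finW PW] by simp
qed

end

lemma adj_arith: "a < k \<Longrightarrow> b < k \<Longrightarrow> (b = sc k a \<or> a = sc k b) \<longleftrightarrow>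
   (b = a + 1 \<or> a = b + 1 \<or> (a + 1 = k \<and> b = 0) \<or> (b + 1 = k \<and> a = 0))"
  by (auto simp: sc_alt)

lemma tri_k3:
  assumes "a < k" "b < k" "c < k" "a \<noteq> b" "a \<noteq> c" "b \<noteq> c"
    "b = sc k a \<or> a = sc k b" "c = sc k a \<or> a = sc k c" "c = sc k b \<or> b = sc k c"
  shows "k = 3"
  using assms unfolding adj_arith[OF assms(1,2)] adj_arith[OF assms(1,3)] adj_arith[OF assms(2,3)]
  by arith

lemma k3_adj:
  assumes "k = 3" "a < k" "b < k" "a \<noteq> b"
  shows "b = sc k a \<or> a = sc k b"
  using assms unfolding adj_arith[OF assms(2,3)] by arith

lemma sc_sc_neq: "3 \<le> k \<Longrightarrow> u < k \<Longrightarrow> sc k (sc k u) \<noteq> u"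
  using sc_lt[of k u] by (auto simp: sc_alt split: if_splits)

context
  fixes k d :: nat and W :: "(nat \<times> nat) set"
  assumes k2: "2 \<le> k" and WV: "W \<subseteq> {..<d} \<times> {..<k}"
begin

abbreviation "EE \<equiv> join_copies_E d {..<k} (cocycle_edge k)"

lemma WV': "W \<subseteq> join_copies_V d {..<k}" using WV by (simp add: V_eq)

lemma ne_iff:
  assumes "x \<in> W" "y \<in> W" "x \<noteq> y"
  shows "\<not> EE x y \<longleftrightarrow> fst x = fst y \<and> (snd y = sc k (snd x) \<or> snd x = sc k (snd y))"
proof -
  have "x \<in> join_copies_V d {..<k}" "y \<in> join_copies_V d {..<k}" using assms(1,2) WV' by blast+
  then show ?thesis by (rule nonedge[OF k2 _ _ assms(3)])
qed

lemma EE_irr: "\<not> EE x x"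
  by (simp add: join_copies_E_def cocycle_edge_def)

lemma indep_iff:
  assumes S: "S \<subseteq> W"
  shows "indep EE S \<longleftrightarrow> (\<forall>x\<in>S. \<forall>y\<in>S. x \<noteq> y \<longrightarrow> fst x = fst y \<and> (snd y = sc k (snd x) \<or> snd x = sc k (snd y)))"
  unfolding indep_def
proof (intro iffI ballI impI)
  fix x y assume H: "\<forall>u\<in>S. \<forall>v\<in>S. \<not> EE u v" and xy: "x \<in> S" "y \<in> S" "x \<noteq> y"
  then have "\<not> EE x y" by blast
  then show "fst x = fst y \<and> (snd y = sc k (snd x) \<or> snd x = sc k (snd y))"
    using ne_iff[of x y] xy S by blast
next
  fix u v assume H: "\<forall>x\<in>S. \<forall>y\<in>S. x \<noteq> y \<longrightarrow> fst x = fst y \<and> (snd y = sc k (snd x) \<or> snd x = sc k (snd y))"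
    and uv: "u \<in> S" "v \<in> S"
  show "\<not> EE u v"
  proof (cases "u = v")
    case True then show ?thesis using EE_irr by simp
  next
    case False
    then have "fst u = fst v \<and> (snd v = sc k (snd u) \<or> snd u = sc k (snd v))" using H uv by blast
    then show ?thesis using ne_iff[of u v] uv S False by blast
  qed
qed

lemma indep2:
  assumes "x \<in> W" "y \<in> W" "x \<noteq> y"
  shows "indep EE {x, y} \<longleftrightarrow> fst x = fst y \<and> (snd y = sc k (snd x) \<or> snd x = sc k (snd y))"
proof -
  have "{x, y} \<subseteq> W" using assms by auto
  then show ?thesis using indep_iff[of "{x, y}"] assms(3) by auto
qed

lemma inW_lt: "(j, u) \<in> W \<Longrightarrow> u < k \<and> j < d" using WV by auto

lemma inW_lt2: "x \<in> W \<Longrightarrow> fst x < d \<and> snd x < k"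
proof -
  assume "x \<in> W"
  then have "x \<in> {..<d} \<times> {..<k}" using WV by blast
  then show ?thesis by (simp add: mem_Times_iff)
qed

lemma P2_k3:
  assumes k3: "3 \<le> k"
  shows "card {S. S \<subseteq> W \<and> card S = 2 \<and> indep EE S} = card (Pw k W)"
proof -
  define \<beta> where "\<beta> x = {x, (fst x, pr k (snd x))}" for x :: "nat \<times> nat"
  have k0: "0 < k" using k2 by simp
  have prne: "pr k u \<noteq> u" if "u < k" for u
    using sc_pr[OF that] sc_neq[OF k2 that] by metis
  have inj: "inj_on \<beta> (Pw k W)"
  proof
    fix x y assume x: "x \<in> Pw k W" and y: "y \<in> Pw k W" and e: "\<beta> x = \<beta> y"
    obtain j u where xj: "x = (j, u)" by (cases x)
    obtain j' u' where yj: "y = (j', u')" by (cases y)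
    have u: "u < k" "u' < k" using x y xj yj inW_lt by (auto simp: Pw_def)
    show "x = y"
    proof (rule ccontr)
      assume ne: "x \<noteq> y"
      have "{x, (fst x, pr k (snd x))} = {y, (fst y, pr k (snd y))}" using e by (simp only: \<beta>_def)
      then have "x = (fst y, pr k (snd y)) \<and> (fst x, pr k (snd x)) = y"
        using ne unfolding doubleton_eq_iff by blast
      then have h1: "snd x = pr k (snd y)" and h2: "snd y = pr k (snd x)" by (metis snd_conv)+
      have e1: "u = pr k u'" using h1 xj yj by simp
      have e2: "u' = pr k u" using h2 xj yj by simp
      have "sc k u = u'" using sc_pr[OF u(2)] e1 by simp
      moreover have "sc k u' = u" using sc_pr[OF u(1)] e2 by simp
      ultimately have "sc k (sc k u) = u" by simp
      then show False using sc_sc_neq[OF k3 u(1)] by simp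
    qed
  qed
  have img: "\<beta> ` Pw k W = {S. S \<subseteq> W \<and> card S = 2 \<and> indep EE S}"
  proof
    show "\<beta> ` Pw k W \<subseteq> {S. S \<subseteq> W \<and> card S = 2 \<and> indep EE S}"
    proof
      fix S assume "S \<in> \<beta> ` Pw k W"
      then obtain j u where ju: "(j, u) \<in> W" "(j, pr k u) \<in> W" "S = {(j, u), (j, pr k u)}"
        by (auto simp: \<beta>_def Pw_def)
      have u: "u < k" using ju inW_lt by auto
      have ne: "(j, u) \<noteq> (j, pr k u)" using prne[OF u] by simp
      have "indep EE S" using indep2[OF ju(1,2) ne] sc_pr[OF u] ju(3) by simp
      then show "S \<in> {S. S \<subseteq> W \<and> card S = 2 \<and> indep EE S}" using ju ne by auto
    qed
    show "{S. S \<subseteq> W \<and> card S = 2 \<and> indep EE S} \<subseteq> \<beta> ` Pw k W"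
    proof
      fix S assume S: "S \<in> {S. S \<subseteq> W \<and> card S = 2 \<and> indep EE S}"
      then obtain x y where xy: "S = {x, y}" "x \<noteq> y" by (auto simp: card_2_iff)
      have xyW: "x \<in> W" "y \<in> W" using S xy by auto
      have a: "fst x = fst y \<and> (snd y = sc k (snd x) \<or> snd x = sc k (snd y))"
        using indep2[OF xyW xy(2)] S xy by simp
      show "S \<in> \<beta> ` Pw k W"
      proof (cases "snd x = sc k (snd y)")
        case True
        have "pr k (snd x) = snd y" using True pr_sc inW_lt xyW by (metis prod.collapse)
        then have px: "(fst x, pr k (snd x)) = y" using a by (simp add: prod_eq_iff)
        then have "x \<in> Pw k W" using xyW by (simp add: Pw_def)
        moreover have "\<beta> x = S" using px xy by (simp add: \<beta>_def)
        ultimately show ?thesis by blast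
      next
        case False
        then have sy: "snd y = sc k (snd x)" using a by simp
        have "pr k (snd y) = snd x" using sy pr_sc inW_lt xyW by (metis prod.collapse)
        then have py: "(fst y, pr k (snd y)) = x" using a by (simp add: prod_eq_iff)
        then have "y \<in> Pw k W" using xyW by (simp add: Pw_def)
        moreover have "\<beta> y = S" using py xy by (simp add: \<beta>_def insert_commute)
        ultimately show ?thesis by blast
      qed
    qed
  qed
  show ?thesis using card_image[OF inj] img by simp
qed

lemma tri_inW:
  assumes S: "S \<subseteq> W" "card S = 3" "indep EE S"
  shows "k = 3 \<and> (\<exists>j. j < d \<and> S = {j} \<times> {..<3} \<and> full k W j)"
proof -
  obtain x y z where xyz: "S = {x, y, z}" "x \<noteq> y" "x \<noteq> z" "y \<noteq> z"
    using S(2) by (auto simp: card_3_iff)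
  have inW: "x \<in> W" "y \<in> W" "z \<in> W" using S(1) xyz(1) by auto
  have H: "\<forall>a\<in>S. \<forall>b\<in>S. a \<noteq> b \<longrightarrow> fst a = fst b \<and> (snd b = sc k (snd a) \<or> snd a = sc k (snd b))"
    using indep_iff[OF S(1)] S(3) by blast
  have xy: "fst x = fst y \<and> (snd y = sc k (snd x) \<or> snd x = sc k (snd y))"
    using H xyz by blast
  have xz: "fst x = fst z \<and> (snd z = sc k (snd x) \<or> snd x = sc k (snd z))"
    using H xyz by blast
  have yz: "fst y = fst z \<and> (snd z = sc k (snd y) \<or> snd y = sc k (snd z))"
    using H xyz by blast
  have lt: "snd x < k" "snd y < k" "snd z < k" "fst x < d" using inW inW_lt2 by blast+
  have dist: "snd x \<noteq> snd y" "snd x \<noteq> snd z" "snd y \<noteq> snd z"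
    using xyz xy xz yz by (auto simp: prod_eq_iff)
  have k3: "k = 3" by (rule tri_k3[OF lt(1,2,3) dist]) (use xy xz yz in auto)
  define j where "j = fst x"
  have sn: "{snd x, snd y, snd z} = {..<3}"
  proof -
    have "{snd x, snd y, snd z} \<subseteq> {..<3}" using lt k3 by auto
    moreover have "card {snd x, snd y, snd z} = 3" using dist by simp
    ultimately show ?thesis by (metis card_lessThan card_subset_eq finite_lessThan)
  qed
  have Sj: "S = {j} \<times> {..<3}"
  proof -
    have "x = (j, snd x)" "y = (j, snd y)" "z = (j, snd z)" using xy xz by (auto simp: j_def prod_eq_iff)
    then have "S = {(j, snd x), (j, snd y), (j, snd z)}" using xyz(1) by simp
    also have "\<dots> = {j} \<times> {snd x, snd y, snd z}" by auto
    finally show ?thesis using sn by simp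
  qed
  have "full k W j" using Sj S(1) k3 by (auto simp: full_def)
  then show ?thesis using k3 Sj lt(4) j_def by blast
qed

lemma no3: "k \<noteq> 3 \<Longrightarrow> S \<subseteq> W \<Longrightarrow> card S = 3 \<Longrightarrow> \<not> indep EE S"
  using tri_inW by blast

lemma P3_k3:
  assumes k3: "k = 3"
  shows "card {S. S \<subseteq> W \<and> card S = 3 \<and> indep EE S} = card (Fl k d W)"
proof -
  define \<gamma> where "\<gamma> j = {j} \<times> {..<(3::nat)}" for j :: nat
  have inj: "inj_on \<gamma> (Fl k d W)"
  proof (rule inj_onI)
    fix j j' assume e: "\<gamma> j = \<gamma> j'"
    have "(j, 0) \<in> \<gamma> j" by (simp add: \<gamma>_def)
    then have "(j, 0) \<in> \<gamma> j'" by (simp only: e)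
    then show "j = j'" by (simp add: \<gamma>_def)
  qed
  have img: "\<gamma> ` Fl k d W = {S. S \<subseteq> W \<and> card S = 3 \<and> indep EE S}"
  proof
    show "\<gamma> ` Fl k d W \<subseteq> {S. S \<subseteq> W \<and> card S = 3 \<and> indep EE S}"
    proof
      fix S assume "S \<in> \<gamma> ` Fl k d W"
      then obtain j where j: "j \<in> Fl k d W" "S = {j} \<times> {..<3}" by (auto simp: \<gamma>_def)
      have fj: "full k W j" using j(1) by (simp add: Fl_def)
      have SW: "S \<subseteq> W"
      proof
        fix a assume "a \<in> S"
        then have "a = (fst a, snd a)" "fst a = j" "snd a < k" using j(2) k3 by (auto simp: mem_Times_iff)
        then show "a \<in> W" using fj unfolding full_def by metis
      qed
      have "card S = 3" using j(2) by (simp add: card_cartesian_product)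
      moreover have "indep EE S"
        unfolding indep_iff[OF SW]
      proof (intro ballI impI)
        fix a b assume ab: "a \<in> S" "b \<in> S" "a \<noteq> b"
        have f: "fst a = j" "fst b = j" "snd a < k" "snd b < k" using ab(1,2) j(2) k3 by (simp_all add: mem_Times_iff)
        have "snd a \<noteq> snd b" using ab(3) f(1,2) by (simp add: prod_eq_iff)
        then have "fst a = fst b" "snd a < k" "snd b < k" "snd a \<noteq> snd b" using f by simp_all
        then show "fst a = fst b \<and> (snd b = sc k (snd a) \<or> snd a = sc k (snd b))"
          using k3_adj[OF k3] by blast
      qed
      ultimately show "S \<in> {S. S \<subseteq> W \<and> card S = 3 \<and> indep EE S}" using SW by blast
    qed
    show "{S. S \<subseteq> W \<and> card S = 3 \<and> indep EE S} \<subseteq> \<gamma> ` Fl k d W"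
    proof
      fix S assume S: "S \<in> {S. S \<subseteq> W \<and> card S = 3 \<and> indep EE S}"
      have "k = 3 \<and> (\<exists>j. j < d \<and> S = {j} \<times> {..<3} \<and> full k W j)" by (rule tri_inW) (use S in simp_all)
      then obtain j where "j < d" "S = {j} \<times> {..<3}" "full k W j" by blast
      then show "S \<in> \<gamma> ` Fl k d W" by (auto simp: \<gamma>_def Fl_def)
    qed
  qed
  show ?thesis using card_image[OF inj] img by simp
qed

lemma uniq_k3:
  assumes k3: "k = 3" and S: "S \<subseteq> W" "card S = 3" "indep EE S"
    and xy: "x \<in> S" "y \<in> S" "x \<noteq> y" and v: "v \<in> W" "v \<notin> {x, y}" and ind: "indep EE {x, y, v}"
  shows "v \<in> S"
proof -
  obtain j where j: "S = {j} \<times> {..<3}" using tri_inW[OF S] by blast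
  have sub: "{x, y, v} \<subseteq> W" using xy v S(1) by auto
  have "fst x = fst v" using ind[unfolded indep_iff[OF sub]] v(2) by auto
  moreover have "fst x = j" using xy(1) j by auto
  moreover have "snd v < 3" using inW_lt2[OF v(1)] k3 by simp
  ultimately show ?thesis using j by (simp add: mem_Times_iff)
qed

lemma P2_k2:
  assumes k2': "k = 2"
  shows "card {S. S \<subseteq> W \<and> card S = 2 \<and> indep EE S} = card (Fl k d W)"
proof -
  define \<gamma> where "\<gamma> j = {(j, 0::nat), (j, 1)}" for j :: nat
  have inj: "inj_on \<gamma> (Fl k d W)"
  proof (rule inj_onI)
    fix j j' assume e: "\<gamma> j = \<gamma> j'"
    have "(j, 0) \<in> \<gamma> j" by (simp add: \<gamma>_def)
    then have "(j, 0) \<in> \<gamma> j'" by (simp only: e)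
    then show "j = j'" by (simp add: \<gamma>_def)
  qed
  have img: "\<gamma> ` Fl k d W = {S. S \<subseteq> W \<and> card S = 2 \<and> indep EE S}"
  proof
    show "\<gamma> ` Fl k d W \<subseteq> {S. S \<subseteq> W \<and> card S = 2 \<and> indep EE S}"
    proof
      fix S assume "S \<in> \<gamma> ` Fl k d W"
      then obtain j where j: "j \<in> Fl k d W" "S = {(j, 0), (j, 1)}" by (auto simp: \<gamma>_def)
      have W2: "(j, 0) \<in> W" "(j, 1) \<in> W" using j k2' by (auto simp: Fl_def full_def)
      have ne: "(j, 0::nat) \<noteq> (j, 1)" by simp
      have "indep EE S" using indep2[OF W2 ne] j(2) k2' by (simp add: sc_def)
      then show "S \<in> {S. S \<subseteq> W \<and> card S = 2 \<and> indep EE S}" using W2 j(2) by auto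
    qed
    show "{S. S \<subseteq> W \<and> card S = 2 \<and> indep EE S} \<subseteq> \<gamma> ` Fl k d W"
    proof
      fix S assume S: "S \<in> {S. S \<subseteq> W \<and> card S = 2 \<and> indep EE S}"
      then obtain x y where xy: "S = {x, y}" "x \<noteq> y" by (auto simp: card_2_iff)
      have xyW: "x \<in> W" "y \<in> W" using S xy by auto
      have f: "fst x = fst y" using indep2[OF xyW xy(2)] S xy by simp
      have lt: "snd x < 2" "snd y < 2" "fst x < d" using inW_lt2[OF xyW(1)] inW_lt2[OF xyW(2)] k2' by simp_all
      have ne: "snd x \<noteq> snd y" using xy(2) f by (auto simp: prod_eq_iff)
      define j where "j = fst x"
      have Sj: "S = \<gamma> j"
      proof (cases "snd x = 0")
        case True
        then have "snd y = 1" using lt ne by arith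
        then show ?thesis using True f xy(1) by (auto simp: \<gamma>_def j_def prod_eq_iff)
      next
        case False
        then have "snd x = 1" "snd y = 0" using lt ne by arith+
        then show ?thesis using f xy(1) by (auto simp: \<gamma>_def j_def prod_eq_iff)
      qed
      have "full k W j"
      proof -
        have "(j, 0) \<in> W" "(j, 1) \<in> W" using Sj S by (auto simp: \<gamma>_def)
        then show ?thesis using k2' by (auto simp: full_def less_2_cases_iff)
      qed
      then have "j \<in> Fl k d W" using lt by (simp add: Fl_def j_def)
      then show "S \<in> \<gamma> ` Fl k d W" using Sj by blast
    qed
  qed
  show ?thesis using card_image[OF inj] img by simp
qed

lemma Pw_k2:
  assumes k2': "k = 2"
  shows "card (Pw k W) = 2 * card (Fl k d W)"
proof -
  have "Pw k W = Fl k d W \<times> {..<2}"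
  proof (rule set_eqI)
    fix x :: "nat \<times> nat"
    obtain j u where x: "x = (j, u)" by (cases x)
    show "x \<in> Pw k W \<longleftrightarrow> x \<in> Fl k d W \<times> {..<2}"
    proof
      assume "x \<in> Pw k W"
      then have a: "(j, u) \<in> W" "(j, pr k u) \<in> W" using x by (auto simp: Pw_def)
      have u: "u < 2" "j < d" using inW_lt2[OF a(1)] k2' by simp_all
      have "pr k u = 1 - u" using u k2' by (auto simp: pr_def less_2_cases_iff)
      then have "full k W j" using a u k2' by (auto simp: full_def less_2_cases_iff)
      then show "x \<in> Fl k d W \<times> {..<2}" using x u by (simp add: Fl_def)
    next
      assume "x \<in> Fl k d W \<times> {..<2}"
      then have "full k W j" "u < 2" using x by (auto simp: Fl_def)
      then show "x \<in> Pw k W" using x k2' pr_lt[of k u] by (auto simp: Pw_def full_def)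
    qed
  qed
  moreover have "finite (Fl k d W)" by (simp add: Fl_def)
  ultimately show ?thesis by (simp add: card_cartesian_product)
qed

end

context
  fixes k d :: nat and W :: "(nat \<times> nat) set"
  assumes k2: "2 \<le> k" and WV: "W \<subseteq> {..<d} \<times> {..<k}"
begin

interpretation sg: sgraph "join_copies_V d {..<k}" "join_copies_E d {..<k} (cocycle_edge k)"
  by (rule sgraph_H[OF k2])

lemma WVg3: "W \<subseteq> join_copies_V d {..<k}" using WV by (simp add: V_eq)

lemma RR_ne: "W \<noteq> {} \<Longrightarrow> 1 \<le> card (RR k d W)"
proof -
  assume "W \<noteq> {}"
  then obtain x where "x \<in> W" by blast
  then have "rep k W x \<in> RR k d W" by (rule rep_in_RR[OF k2 WV])
  moreover have "finite (RR k d W)" using finite_subset[OF RR_sub[OF k2 WV] finW[OF k2 WV]] .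
  ultimately show ?thesis by (metis One_nat_def Suc_leI card_gt_0_iff empty_iff)
qed

lemma hdimA:
  assumes cW: "card W = i + 1" and i1: "1 \<le> i"
  shows "koszul_hdim TYPE('k::field) (join_copies_V d {..<k}) (join_copies_E d {..<k} (cocycle_edge k)) (ind W) i
     + 1 + card (Pw k W) = card W + card (Fl k d W)"
proof -
  have "koszul_hdim TYPE('k::field) (join_copies_V d {..<k}) (join_copies_E d {..<k} (cocycle_edge k)) (ind W) i
      = kv.dim (Zs (join_copies_E d {..<k} (cocycle_edge k)) W :: ((nat \<times> nat) \<Rightarrow> 'k) set) - 1"
    by (rule sg.Q1[OF WVg3 cW i1])
  also have "kv.dim (Zs (join_copies_E d {..<k} (cocycle_edge k)) W :: ((nat \<times> nat) \<Rightarrow> 'k) set) = card (RR k d W)"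
    by (rule dim_Zs[OF k2 WV])
  finally show ?thesis using card_RR[OF k2 WV] RR_ne cW by fastforce
qed

lemma hdimB:
  assumes cW: "card W = i + 2" and i1: "1 \<le> i"
  shows "koszul_hdim TYPE('k::field) (join_copies_V d {..<k}) (join_copies_E d {..<k} (cocycle_edge k)) (ind W) i
     = (if 4 \<le> k then card (Fl k d W) else 0)"
proof -
  let ?V = "join_copies_V d {..<k}" and ?E = "join_copies_E d {..<k} (cocycle_edge k)"
  let ?ker = "kv.dim {c \<in> Lsp (kbasis ?V ?E (ind W) i). kbd ?V ?E (ind W) i c = (0 :: (nat \<times> nat) set \<Rightarrow> 'k)}"
  let ?img = "kv.dim (kbd ?V ?E (ind W) (i + 1) ` (Lsp (kbasis ?V ?E (ind W) (i + 1)) :: ((nat \<times> nat) set \<Rightarrow> 'k) set))"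
  have h: "koszul_hdim TYPE('k::field) ?V ?E (ind W) i = ?ker - ?img"
    by (rule hdim_eq1[OF i1])
  have img: "?img = card W - kv.dim (Zs ?E W :: ((nat \<times> nat) \<Rightarrow> 'k) set)"
    by (rule sg.Q2img[OF WVg3 cW])
  have dz: "kv.dim (Zs ?E W :: ((nat \<times> nat) \<Rightarrow> 'k) set) = card (RR k d W)"
    by (rule dim_Zs[OF k2 WV])
  have cr: "card (RR k d W) + card (Pw k W) = card W + card (Fl k d W)" by (rule card_RR[OF k2 WV])
  have rw: "card (RR k d W) \<le> card W" using card_mono[OF finW[OF k2 WV] RR_sub[OF k2 WV]] .
  have img2: "?img + card (Fl k d W) = card (Pw k W)" using img dz cr rw by simp
  show ?thesis
  proof (cases "k = 3")
    case True
    have ker: "?ker = card {S. S \<subseteq> W \<and> card S = 2 \<and> indep ?E S} - card {S. S \<subseteq> W \<and> card S = 3 \<and> indep ?E S}"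
      by (rule sg.Q2ker_b[OF WVg3 cW i1]) (rule uniq_k3[OF k2 WV True], assumption+)
    have "card {S. S \<subseteq> W \<and> card S = 2 \<and> indep ?E S} = card (Pw k W)" by (rule P2_k3[OF k2 WV]) (use True in simp)
    moreover have "card {S. S \<subseteq> W \<and> card S = 3 \<and> indep ?E S} = card (Fl k d W)" by (rule P3_k3[OF k2 WV True])
    ultimately have "?ker = ?img" using ker img2 by simp
    then show ?thesis using h True by simp
  next
    case False
    have ker: "?ker = card {S. S \<subseteq> W \<and> card S = 2 \<and> indep ?E S}"
      by (rule sg.Q2ker_a[OF WVg3 cW i1]) (rule no3[OF k2 WV False], assumption+)
    show ?thesis
    proof (cases "k = 2")
      case True
      have "card {S. S \<subseteq> W \<and> card S = 2 \<and> indep ?E S} = card (Fl k d W)" by (rule P2_k2[OF k2 WV True])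
      moreover have "card (Pw k W) = 2 * card (Fl k d W)" by (rule Pw_k2[OF k2 WV True])
      ultimately have "?ker = ?img" using ker img2 by simp
      then show ?thesis using h True by simp
    next
      case False
      then have k4: "4 \<le> k" using k2 \<open>k \<noteq> 3\<close> by simp
      have "card {S. S \<subseteq> W \<and> card S = 2 \<and> indep ?E S} = card (Pw k W)" by (rule P2_k3[OF k2 WV]) (use k4 in simp)
      then have "?ker = ?img + card (Fl k d W)" using ker img2 by simp
      then show ?thesis using h k4 by simp
    qed
  qed
qed

end

lemma sum_ind: "finite V \<Longrightarrow> W \<subseteq> V \<Longrightarrow> sum (ind W) V = card W"
proof -
  assume f: "finite V" and s: "W \<subseteq> V"
  have "sum (ind W) V = (\<Sum>v\<in>V. if v \<in> W then 1 else 0)" by (simp add: ind_def)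
  also have "\<dots> = card (V \<inter> W)" by (simp add: sum.If_cases[OF f] Int_def)
  also have "V \<inter> W = W" using s by blast
  finally show ?thesis .
qed

context sgraph
begin

lemma betti_sf:
  assumes i1: "1 \<le> i" and j: "j = i + 1 \<or> j = i + 2"
  shows "betti TYPE('k::field) V E i j = (\<Sum>W\<in>{W. W \<subseteq> V \<and> card W = j}. koszul_hdim TYPE('k) V E (ind W) i)"
proof -
  define A where "A = {a. (\<forall>v. v \<notin> V \<longrightarrow> a v = 0) \<and> sum a V = j}"
  define \<W> where "\<W> = {W. W \<subseteq> V \<and> card W = j}"
  have finA: "finite A"
  proof (rule finite_subset)
    show "A \<subseteq> {a. \<forall>v. (v \<in> V \<longrightarrow> a v \<in> {0..j}) \<and> (v \<notin> V \<longrightarrow> a v = 0)}"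
    proof
      fix a assume a: "a \<in> A"
      have "a v \<le> j" if "v \<in> V" for v
        using member_le_sum[of v V a] that finV a by (auto simp: A_def)
      then show "a \<in> {a. \<forall>v. (v \<in> V \<longrightarrow> a v \<in> {0..j}) \<and> (v \<notin> V \<longrightarrow> a v = 0)}"
        using a by (auto simp: A_def)
    qed
    show "finite {a. \<forall>v. (v \<in> V \<longrightarrow> a v \<in> {0..j}) \<and> (v \<notin> V \<longrightarrow> a v = (0::nat))}"
      by (rule finite_set_of_finite_funs[OF finV]) simp
  qed
  have sub: "ind ` \<W> \<subseteq> A"
    using sum_ind[OF finV] by (auto simp: A_def \<W>_def ind_def)
  have inj: "inj_on ind \<W>"
  proof (rule inj_onI)
    fix W W' assume "ind W = ind W'"
    then have "\<forall>v. (v \<in> W) = (v \<in> W')" by (metis ind_def one_neq_zero)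
    then show "W = W'" by blast
  qed
  have zero: "koszul_hdim TYPE('k) V E a i = 0" if a: "a \<in> A - ind ` \<W>" for a
  proof -
    define W where "W = {v. 0 < a v}"
    define T where "T = {v. 2 \<le> a v}"
    have aV: "\<forall>v. v \<notin> V \<longrightarrow> a v = 0" and sa: "sum a V = j" using a by (auto simp: A_def)
    have WV: "W \<subseteq> V" "T \<subseteq> V" using aV by (auto simp: W_def T_def)
    have finW: "finite W" "finite T" using WV finite_subset finV by auto
    have Tne: "T \<noteq> {}"
    proof
      assume T0: "T = {}"
      have "a v \<le> 1" for v
      proof (rule ccontr)
        assume "\<not> a v \<le> 1"
        then have "v \<in> T" by (simp add: T_def)
        then show False using T0 by simp
      qed
      then have "a = ind W" unfolding fun_eq_iff ind_def W_def
        by (metis (mono_tags, lifting) One_nat_def le_SucE le_zero_eq mem_Collect_eq not_gr_zero)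
      moreover have "card W = j" using sa sum_ind[OF finV WV(1)] \<open>a = ind W\<close> by simp
      ultimately have "a \<in> ind ` \<W>" using WV by (auto simp: \<W>_def)
      then show False using a by blast
    qed
    have le: "ind W v + ind T v \<le> a v" for v by (auto simp: ind_def W_def T_def)
    have "sum (\<lambda>v. ind W v + ind T v) V = card W + card T"
      using sum_ind[OF finV WV(1)] sum_ind[OF finV WV(2)] by (simp add: sum.distrib)
    moreover have "sum (\<lambda>v. ind W v + ind T v) V \<le> sum a V" using le by (intro sum_mono) auto
    ultimately have cWT: "card W + card T \<le> j" using sa by simp
    have cT: "1 \<le> card T" using Tne finW(2) by (simp add: Suc_le_eq card_gt_0_iff)
    obtain t where tT: "t \<in> T" using Tne by blast
    show ?thesis
    proof (cases "card W \<le> i")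
      case True
      show ?thesis
        by (rule lemZ[OF aV i1]) (use True tT in \<open>simp_all add: W_def T_def\<close>)
    next
      case False
      then have j2: "j = i + 2" "card W = i + 1" "card T = 1" using j cWT cT by auto
      have "\<exists>x. T = {x}" using j2(3) by (simp add: card_1_singleton_iff)
      then obtain x where "T = {x}" by blast
      then have T1: "T = {t}" using tT by simp
      have eqs: "sum (\<lambda>v. ind W v + ind T v) V = sum a V"
        using sum_ind[OF finV WV(1)] sum_ind[OF finV WV(2)] j2 sa by (simp add: sum.distrib)
      have aeq: "a = (\<lambda>v. ind W v + (if v = t then 1 else 0))"
      proof
        fix v
        show "a v = ind W v + (if v = t then 1 else 0)"
        proof (cases "v \<in> V")
          case True
          have "ind W v + ind T v = a v" by (rule sum_mono_inv[OF eqs le True finV])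
          then show ?thesis using T1 by (simp add: ind_def)
        next
          case False
          then have "v \<notin> W" "v \<noteq> t" using WV tT by auto
          then show ?thesis using aV False by (simp add: ind_def)
        qed
      qed
      have tW: "t \<in> W" using tT by (simp add: W_def T_def)
      show ?thesis by (rule lemS[OF WV(1) tW j2(2) i1 aeq])
    qed
  qed
  have "betti TYPE('k) V E i j = (\<Sum>a\<in>A. koszul_hdim TYPE('k) V E a i)"
    by (simp add: betti_def A_def)
  also have "\<dots> = (\<Sum>a\<in>ind ` \<W>. koszul_hdim TYPE('k) V E a i)"
    by (rule sum.mono_neutral_right[OF finA sub]) (use zero in blast)
  also have "\<dots> = (\<Sum>W\<in>\<W>. koszul_hdim TYPE('k) V E (ind W) i)"
    by (rule sum.reindex[OF inj, unfolded comp_def])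
  finally show ?thesis by (simp add: \<W>_def)
qed

end

lemma card_supsets:
  assumes finV: "finite V" and AV: "A \<subseteq> V"
  shows "card {W. W \<subseteq> V \<and> card W = m \<and> A \<subseteq> W} =
     (if card A \<le> m then (card V - card A) choose (m - card A) else 0)"
proof (cases "card A \<le> m")
  case True
  have finA: "finite A" using finite_subset[OF AV finV] .
  have "bij_betw (\<lambda>W. W - A) {W. W \<subseteq> V \<and> card W = m \<and> A \<subseteq> W} {S. S \<subseteq> V - A \<and> card S = m - card A}"
  proof (rule bij_betw_byWitness[where f' = "\<lambda>S. S \<union> A"])
    show "\<forall>W\<in>{W. W \<subseteq> V \<and> card W = m \<and> A \<subseteq> W}. W - A \<union> A = W" by blast
    show "\<forall>S\<in>{S. S \<subseteq> V - A \<and> card S = m - card A}. S \<union> A - A = S" by blast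
    show "(\<lambda>W. W - A) ` {W. W \<subseteq> V \<and> card W = m \<and> A \<subseteq> W} \<subseteq> {S. S \<subseteq> V - A \<and> card S = m - card A}"
    proof
      fix S assume "S \<in> (\<lambda>W. W - A) ` {W. W \<subseteq> V \<and> card W = m \<and> A \<subseteq> W}"
      then obtain W where W: "W \<subseteq> V" "card W = m" "A \<subseteq> W" "S = W - A" by blast
      have "card (W - A) = card W - card A" by (rule card_Diff_subset[OF finA W(3)])
      then show "S \<in> {S. S \<subseteq> V - A \<and> card S = m - card A}" using W by auto
    qed
    show "(\<lambda>S. S \<union> A) ` {S. S \<subseteq> V - A \<and> card S = m - card A} \<subseteq> {W. W \<subseteq> V \<and> card W = m \<and> A \<subseteq> W}"
    proof
      fix W assume "W \<in> (\<lambda>S. S \<union> A) ` {S. S \<subseteq> V - A \<and> card S = m - card A}"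
      then obtain S where S: "S \<subseteq> V - A" "card S = m - card A" "W = S \<union> A" by blast
      have finS: "finite S" using finite_subset[OF S(1)] finV by blast
      have "S \<inter> A = {}" using S(1) by blast
      then have "card W = card S + card A" using S(3) finS finA by (simp add: card_Un_disjoint)
      then show "W \<in> {W. W \<subseteq> V \<and> card W = m \<and> A \<subseteq> W}" using S AV True by auto
    qed
  qed
  then have "card {W. W \<subseteq> V \<and> card W = m \<and> A \<subseteq> W} = card {S. S \<subseteq> V - A \<and> card S = m - card A}"
    by (rule bij_betw_same_card)
  also have "\<dots> = card (V - A) choose (m - card A)" by (rule n_subsets) (use finV in simp)
  also have "card (V - A) = card V - card A" by (rule card_Diff_subset[OF finA AV])
  finally show ?thesis using True by simp
next
  case False
  have E: "{W. W \<subseteq> V \<and> card W = m \<and> A \<subseteq> W} = {}"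
  proof (rule ccontr)
    assume "{W. W \<subseteq> V \<and> card W = m \<and> A \<subseteq> W} \<noteq> {}"
    then obtain W where W: "W \<subseteq> V" "card W = m" "A \<subseteq> W" by blast
    have "card A \<le> card W" by (rule card_mono[OF finite_subset[OF W(1) finV] W(3)])
    then show False using False W(2) by simp
  qed
  show ?thesis unfolding E using False by simp
qed

lemma double_count:
  assumes "finite \<W>" "finite X"
  shows "(\<Sum>W\<in>\<W>. card {x\<in>X. P x W}) = (\<Sum>x\<in>X. card {W\<in>\<W>. P x W})"
proof -
  have c1: "card {x\<in>X. P x W} = (\<Sum>x\<in>X. if P x W then 1 else 0)" for W
    using assms(2) by (simp add: sum.If_cases Int_def)
  have c2: "card {W\<in>\<W>. P x W} = (\<Sum>W\<in>\<W>. if P x W then 1 else 0)" for x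
    using assms(1) by (simp add: sum.If_cases Int_def)
  show ?thesis unfolding c1 c2 by (rule sum.swap)
qed

context
  fixes k d :: nat
  assumes k2: "2 \<le> k"
begin

definition "V0 = {..<d} \<times> {..<k}"
definition "WW m = {W. W \<subseteq> V0 \<and> card W = m}"

lemma finV0: "finite V0" by (simp add: V0_def)
lemma cardV0: "card V0 = d * k" by (simp add: V0_def card_cartesian_product)
lemma finWW: "finite (WW m)"
  by (rule finite_subset[of _ "Pow V0"]) (auto simp: WW_def finV0)

lemma sum_card: "(\<Sum>W\<in>WW m. card W) = m * (d * k choose m)"
proof -
  have "(\<Sum>W\<in>WW m. card W) = (\<Sum>W\<in>WW m. m)" by (rule sum.cong) (auto simp: WW_def)
  also have "\<dots> = m * card (WW m)" by simp
  also have "card (WW m) = d * k choose m" unfolding WW_def using n_subsets[OF finV0] cardV0 by simp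
  finally show ?thesis .
qed

lemma sum_Pw:
  assumes m2: "2 \<le> m"
  shows "(\<Sum>W\<in>WW m. card (Pw k W)) = d * k * (d * k - 2 choose (m - 2))"
proof -
  have k0: "0 < k" using k2 by simp
  have "Pw k W = {x\<in>V0. x \<in> W \<and> (fst x, pr k (snd x)) \<in> W}" if "W \<in> WW m" for W
    using that by (auto simp: Pw_def WW_def)
  then have "(\<Sum>W\<in>WW m. card (Pw k W)) = (\<Sum>W\<in>WW m. card {x\<in>V0. x \<in> W \<and> (fst x, pr k (snd x)) \<in> W})"
    by (intro sum.cong) auto
  also have "\<dots> = (\<Sum>x\<in>V0. card {W\<in>WW m. x \<in> W \<and> (fst x, pr k (snd x)) \<in> W})"
    by (rule double_count[OF finWW finV0])
  also have "\<dots> = (\<Sum>x\<in>V0. d * k - 2 choose (m - 2))"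
  proof (rule sum.cong)
    fix x assume x: "x \<in> V0"
    have px: "(fst x, pr k (snd x)) \<in> V0" using x pr_lt[OF k0] by (auto simp: V0_def mem_Times_iff)
    have ne: "x \<noteq> (fst x, pr k (snd x))"
    proof
      assume "x = (fst x, pr k (snd x))"
      then have "snd x = pr k (snd x)" by (metis snd_conv)
      moreover have "snd x < k" using x by (auto simp: V0_def mem_Times_iff)
      ultimately show False using sc_pr sc_neq[OF k2] by metis
    qed
    have "{W\<in>WW m. x \<in> W \<and> (fst x, pr k (snd x)) \<in> W} = {W. W \<subseteq> V0 \<and> card W = m \<and> {x, (fst x, pr k (snd x))} \<subseteq> W}"
      by (auto simp: WW_def)
    also have "card \<dots> = d * k - 2 choose (m - 2)"
      using card_supsets[OF finV0, of "{x, (fst x, pr k (snd x))}" m] x px ne m2 cardV0 by (simp add: numeral_2_eq_2)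
    finally show "card {W\<in>WW m. x \<in> W \<and> (fst x, pr k (snd x)) \<in> W} = d * k - 2 choose (m - 2)" .
  qed simp
  also have "\<dots> = d * k * (d * k - 2 choose (m - 2))" using cardV0 by simp
  finally show ?thesis .
qed

lemma sum_Fl:
  "(\<Sum>W\<in>WW m. card (Fl k d W)) = (if k \<le> m then d * ((d - 1) * k choose (m - k)) else 0)"
proof -
  have "Fl k d W = {j\<in>{..<d}. {j} \<times> {..<k} \<subseteq> W}" for W
    by (auto simp: Fl_def full_def)
  then have "(\<Sum>W\<in>WW m. card (Fl k d W)) = (\<Sum>W\<in>WW m. card {j\<in>{..<d}. {j} \<times> {..<k} \<subseteq> W})"
    by simp
  also have "\<dots> = (\<Sum>j\<in>{..<d}. card {W\<in>WW m. {j} \<times> {..<k} \<subseteq> W})"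
    by (rule double_count[OF finWW]) simp
  also have "\<dots> = (\<Sum>j\<in>{..<d}. if k \<le> m then (d - 1) * k choose (m - k) else 0)"
  proof (rule sum.cong)
    fix j assume j: "j \<in> {..<d}"
    have sub: "{j} \<times> {..<k} \<subseteq> V0" using j by (auto simp: V0_def)
    have ck: "card ({j} \<times> {..<k}) = k" by (simp add: card_cartesian_product)
    have "{W\<in>WW m. {j} \<times> {..<k} \<subseteq> W} = {W. W \<subseteq> V0 \<and> card W = m \<and> {j} \<times> {..<k} \<subseteq> W}"
      by (auto simp: WW_def)
    also have "card \<dots> = (if k \<le> m then (d * k - k) choose (m - k) else 0)"
      using card_supsets[OF finV0 sub, of m] ck cardV0 by simp
    also have "d * k - k = (d - 1) * k" by (simp add: diff_mult_distrib)
    finally show "card {W\<in>WW m. {j} \<times> {..<k} \<subseteq> W} = (if k \<le> m then (d - 1) * k choose (m - k) else 0)" .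
  qed simp
  finally show ?thesis by simp
qed

end

lemma binom_id:
  assumes N: "2 \<le> N" and i: "1 \<le> i"
  shows "N * (N - 1) * (N - 2 choose (i - 1)) = (N choose (i + 1)) * (i + 1) * i"
proof -
  obtain n where n: "N = Suc (Suc n)" using N by (metis add_2_eq_Suc le_Suc_ex)
  obtain i' where i': "i = Suc i'" using i by (cases i) auto
  have e1: "Suc (Suc n) * (Suc n choose i) = (Suc (Suc n) choose Suc i) * Suc i"
    by (rule Suc_times_binomial_eq)
  have e2: "Suc n * (n choose i') = (Suc n choose Suc i') * Suc i'"
    by (rule Suc_times_binomial_eq)
  have "N * (N - 1) * (N - 2 choose (i - 1)) = Suc (Suc n) * (Suc n * (n choose i'))"
    using n i' by (simp only: diff_Suc_Suc diff_Suc_1 diff_zero mult.assoc numeral_2_eq_2)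
  also have "\<dots> = Suc (Suc n) * ((Suc n choose i) * i)"
  proof -
    have e2': "Suc n * (n choose i') = (Suc n choose i) * i" using e2 by (simp only: i')
    show ?thesis by (simp only: e2')
  qed
  also have "\<dots> = (Suc (Suc n) * (Suc n choose i)) * i" by (simp only: mult.assoc)
  also have "\<dots> = ((Suc (Suc n) choose Suc i) * Suc i) * i" by (simp only: e1)
  also have "\<dots> = (N choose (i + 1)) * (i + 1) * i" by (simp only: n Suc_eq_plus1)
  finally show ?thesis .
qed

theorem theorem3p6:
  fixes k d i :: nat
  assumes "k \<ge> 2" and "d \<ge> 2" and "i \<ge> 1"
  defines "V \<equiv> join_copies_V d {..<k}"
      and "E \<equiv> join_copies_E d {..<k} (cocycle_edge k)"
  shows "(real (betti TYPE('k::field) V E i (i + 1)) =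
           real (d * k choose (i + 1)) * real i * (real (d * k) - real i - 2) / (real (d * k) - 1)
           + (if k \<le> i + 1 then real d * real ((d - 1) * k choose (i + 1 - k)) else 0))
         \<and> betti TYPE('k::field) V E i (i + 2) =
           (if 4 \<le> k then (if k \<le> i + 2 then d * ((d - 1) * k choose (i + 2 - k)) else 0)
            else 0)"
proof -
  have k2: "2 \<le> k" and d2: "2 \<le> d" and i1: "1 \<le> i" using assms(1-3) by auto
  have sg: "sgraph V E" unfolding V_def E_def by (rule sgraph_H[OF k2])
  have VV: "V = {..<d} \<times> {..<k}" unfolding V_def by (rule V_eq)
  have WWe: "{W. W \<subseteq> V \<and> card W = m} = WW k d m" for m
    using WW_def[OF k2] V0_def[OF k2] VV by simp
  define N where "N = d * k"
  have N4: "4 \<le> N" using k2 d2 mult_le_mono[OF d2 k2] by (simp add: N_def)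
  have b1: "betti TYPE('k) V E i (i + 1) = (\<Sum>W\<in>WW k d (i + 1). koszul_hdim TYPE('k) V E (ind W) i)"
    using sgraph.betti_sf[OF sg i1, of "i + 1"] WWe by simp
  have hA: "real (koszul_hdim TYPE('k) V E (ind W) i) = real i - real (card (Pw k W)) + real (card (Fl k d W))"
    if W: "W \<in> WW k d (i + 1)" for W
  proof -
    have WV: "W \<subseteq> {..<d} \<times> {..<k}" "card W = i + 1" using W WWe VV by auto
    have "koszul_hdim TYPE('k) V E (ind W) i + 1 + card (Pw k W) = card W + card (Fl k d W)"
      unfolding V_def E_def by (rule hdimA[OF k2 WV i1])
    then show ?thesis using WV(2) by (simp add: algebra_simps flip: of_nat_add)
  qed
  have "real (betti TYPE('k) V E i (i + 1)) = (\<Sum>W\<in>WW k d (i + 1). real (koszul_hdim TYPE('k) V E (ind W) i))"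
    using b1 by simp
  also have "\<dots> = (\<Sum>W\<in>WW k d (i + 1). real i - real (card (Pw k W)) + real (card (Fl k d W)))"
    using hA by (rule sum.cong[OF refl])
  also have "\<dots> = real i * real (card (WW k d (i + 1))) - real (\<Sum>W\<in>WW k d (i + 1). card (Pw k W))
      + real (\<Sum>W\<in>WW k d (i + 1). card (Fl k d W))"
    by (simp add: sum.distrib sum_subtractf)
  also have "card (WW k d (i + 1)) = N choose (i + 1)"
    using sum_card[OF k2, of d "i + 1"] WW_def[OF k2] N_def
    by (simp add: WW_def[OF k2] V0_def[OF k2] n_subsets card_cartesian_product)
  also have "(\<Sum>W\<in>WW k d (i + 1). card (Pw k W)) = N * (N - 2 choose (i - 1))"
    using sum_Pw[OF k2, of "i + 1" d] i1 by (simp add: N_def)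
  also have "(\<Sum>W\<in>WW k d (i + 1). card (Fl k d W)) = (if k \<le> i + 1 then d * ((d - 1) * k choose (i + 1 - k)) else 0)"
    by (rule sum_Fl[OF k2])
  finally have r1: "real (betti TYPE('k) V E i (i + 1)) = real i * real (N choose (i + 1)) - real (N * (N - 2 choose (i - 1)))
      + real (if k \<le> i + 1 then d * ((d - 1) * k choose (i + 1 - k)) else 0)" .
  have bid: "real N * (real N - 1) * real (N - 2 choose (i - 1)) = real (N choose (i + 1)) * (real i + 1) * real i"
  proof -
    have "real (N * (N - 1) * (N - 2 choose (i - 1))) = real ((N choose (i + 1)) * (i + 1) * i)"
      using binom_id[of N i] N4 i1 by simp
    then show ?thesis using N4 by (simp add: of_nat_diff algebra_simps)
  qed
  have N1: "real N - 1 \<noteq> 0" using N4 by simp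
  have key: "real i * real (N choose (i + 1)) - real (N * (N - 2 choose (i - 1)))
      = real (N choose (i + 1)) * real i * (real N - real i - 2) / (real N - 1)"
  proof -
    have "(real i * real (N choose (i + 1)) - real (N * (N - 2 choose (i - 1)))) * (real N - 1)
        = real (N choose (i + 1)) * real i * (real N - real i - 2)"
      using bid by (simp add: algebra_simps)
    then show ?thesis using N1 by (simp add: field_simps)
  qed
  have part1: "real (betti TYPE('k::field) V E i (i + 1)) =
           real (d * k choose (i + 1)) * real i * (real (d * k) - real i - 2) / (real (d * k) - 1)
           + (if k \<le> i + 1 then real d * real ((d - 1) * k choose (i + 1 - k)) else 0)"
    using r1 key by (simp add: N_def)
  have b2: "betti TYPE('k) V E i (i + 2) = (\<Sum>W\<in>WW k d (i + 2). koszul_hdim TYPE('k) V E (ind W) i)"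
    using sgraph.betti_sf[OF sg i1, of "i + 2"] WWe by simp
  also have "\<dots> = (\<Sum>W\<in>WW k d (i + 2). if 4 \<le> k then card (Fl k d W) else 0)"
  proof (rule sum.cong[OF refl])
    fix W assume W: "W \<in> WW k d (i + 2)"
    have WV: "W \<subseteq> {..<d} \<times> {..<k}" "card W = i + 2" using W WWe VV by auto
    show "koszul_hdim TYPE('k) V E (ind W) i = (if 4 \<le> k then card (Fl k d W) else 0)"
      unfolding V_def E_def by (rule hdimB[OF k2 WV i1])
  qed
  also have "\<dots> = (if 4 \<le> k then (if k \<le> i + 2 then d * ((d - 1) * k choose (i + 2 - k)) else 0) else 0)"
    using sum_Fl[OF k2, of d "i + 2"] by simp
  finally show ?thesis using part1 by simp
qed

end
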